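(* Let $n\geq 1$ and let $f:GL_n(R)\rightarrow \mathfrak{gl}_n(R)$ be a $\delta$-map which is a cocycle for the adjoint action, i.e. for all $g_1,g_2\in GL_n(R)$, $$f(g_1g_2)=f(g_1)+g_1f(g_2)g_1^{-1}.$$ Then there exist a $\delta$-homomorphism $\omega:\mathbb{G}_m\rightarrow\mathbb{G}_a$ (i.e. a group homomorphism $\omega:R^{\times}\rightarrow R$ which is a $\delta$-map) and a matrix $v\in\mathfrak{gl}_n(R)$ such that for all $g\in GL_n(R)$, $$f(g)=\omega(\det(g))\,1_n+gvg^{-1}-v.$$
   Context: $\delta$-arithmetic setting: $p$ is an odd prime and $R$ is the unique complete discrete valuation ring with maximal ideal $pR$ and residue field $R/pR$ equal to the algebraic closure $\mathbb{F}_p^a$ of $\mathbb{F}_p$ (i.e. the Witt vectors of $\mathbb{F}_p^a$). Let $\phi:R\rightarrow R$ be the unique ring homomorphism lifting the $p$-power Frobenius of the residue field, and let $\delta:R\rightarrow R$ be $\delta x=(\phi(x)-x^p)/p$. For a tuple of variables $x$, write $\hat{\ }$ for $p$-adic completion. A map $f:R^N\rightarrow R^M$ is a $\delta$-map (of order $m$) if there is an $M$-tuple $F$ of restricted power series in $R[x_0,\dots,x_m]\hat{\ }$ ($x_i$ being $N$-tuples of variables) with $f(a)=F(a,\delta a,\dots,\delta^m a)$ for all $a\in R^N$ ($\delta$ applied componentwise). For $GL_n$, $\mathbb{G}_m$, etc., a $\delta$-map is a map of $R$-points of this form where the power series may also involve the inverse of the determinant (for $GL_n$) or $x^{-1}$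 (for $\mathbb{G}_m$), i.e. $F$ has entries in $R[x,\det(x)^{-1},x',\dots,x^{(m)}]\hat{\ }$ with $f(g)=F(g,\delta g,\dots,\delta^m g)$. $\mathfrak{gl}_n(R)$ denotes all $n\times n$ matrices over $R$ and $1_n$ the identity matrix. *)

theory Defs
  imports "HOL-Analysis.Analysis" "HOL-Computational_Algebra.Polynomial"
begin

text \<open>Abstract characterisation of the delta-arithmetic setting: R is a complete DVR
with maximal ideal pR (p odd prime), residue field algebraically closed and algebraic
over F_p (hence equal to the algebraic closure of F_p), and phi is a ring endomorphism
lifting Frobenius.\<close>

definition runit :: "'r::idom \<Rightarrow> bool" where
  "runit u \<longleftrightarrow> (\<exists>v. u * v = 1)"

definition delta_setting :: "nat \<Rightarrow> ('r::idom \<Rightarrow> 'r) \<Rightarrow> bool" where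
  "delta_setting p \<phi> \<longleftrightarrow>
     prime p \<and> odd p \<and> (of_nat p :: 'r) \<noteq> 0 \<and> \<not> runit (of_nat p :: 'r) \<and>
     (\<forall>x::'r. x \<noteq> 0 \<longrightarrow> (\<exists>u k. runit u \<and> x = u * of_nat p ^ k)) \<and>
     (\<forall>X::nat \<Rightarrow> 'r. (\<forall>k. \<exists>N. \<forall>m\<ge>N. (of_nat p ^ k) dvd (X m - X N)) \<longrightarrow>
         (\<exists>L. \<forall>k. \<exists>N. \<forall>m\<ge>N. (of_nat p ^ k) dvd (X m - L))) \<and>
     (\<forall>P::'r poly. degree P \<ge> 1 \<and> \<not> (of_nat p) dvd lead_coeff P \<longrightarrow>
         (\<exists>a. (of_nat p) dvd poly P a)) \<and>
     (\<forall>a::'r. \<exists>k\<ge>1. (of_nat p) dvd (a ^ (p ^ k) - a)) \<and>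
     \<phi> 1 = 1 \<and> (\<forall>x y. \<phi> (x + y) = \<phi> x + \<phi> y) \<and> (\<forall>x y. \<phi> (x * y) = \<phi> x * \<phi> y) \<and>
     (\<forall>x. (of_nat p) dvd (\<phi> x - x ^ p))"

definition delta :: "nat \<Rightarrow> ('r::idom \<Rightarrow> 'r) \<Rightarrow> 'r \<Rightarrow> 'r" where
  "delta p \<phi> x = (THE y. of_nat p * y = \<phi> x - x ^ p)"

definition ring_inv :: "'r::idom \<Rightarrow> 'r" where
  "ring_inv u = (THE v. u * v = 1)"

text \<open>Restricted power series with coefficients in R in the variables of V:
coefficient functions on monomials (exponent vectors of finite support in V)
whose coefficients tend to 0 p-adically.\<close>

definition rps :: "nat \<Rightarrow> 'v set \<Rightarrow> (('v \<Rightarrow> nat) \<Rightarrow> 'r::idom) \<Rightarrow> bool" where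
  "rps p V c \<longleftrightarrow>
     (\<forall>\<alpha>. c \<alpha> \<noteq> 0 \<longrightarrow> finite {v. \<alpha> v \<noteq> 0} \<and> {v. \<alpha> v \<noteq> 0} \<subseteq> V) \<and>
     (\<forall>k. finite {\<alpha>. \<not> (of_nat p ^ k :: 'r) dvd c \<alpha>})"

definition mon_eval :: "('v \<Rightarrow> nat) \<Rightarrow> ('v \<Rightarrow> 'r::idom) \<Rightarrow> 'r" where
  "mon_eval \<alpha> a = (\<Prod>v\<in>{v. \<alpha> v \<noteq> 0}. a v ^ \<alpha> v)"

text \<open>y is the (p-adically convergent) value of the series c at the point a:
modulo p^k, y agrees with the polynomial truncation of c mod p^k evaluated at a.\<close>

definition rps_val :: "nat \<Rightarrow> (('v \<Rightarrow> nat) \<Rightarrow> 'r::idom) \<Rightarrow> ('v \<Rightarrow> 'r) \<Rightarrow> 'r \<Rightarrow> bool" where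
  "rps_val p c a y \<longleftrightarrow>
     (\<forall>k. (of_nat p ^ k) dvd
        (y - (\<Sum>\<alpha>\<in>{\<alpha>. \<not> (of_nat p ^ k :: 'r) dvd c \<alpha>}. c \<alpha> * mon_eval \<alpha> a)))"

definition GL_set :: "('r::idom ^'n^'n) set" where
  "GL_set = {g. runit (det g)}"

definition mat_inv :: "'r::idom ^'n^'n \<Rightarrow> 'r ^'n^'n" where
  "mat_inv g = (THE h. g ** h = mat 1 \<and> h ** g = mat 1)"

text \<open>Point (g, det(g)^{-1}, delta g, ..., delta^l g, ...): variable None is det^{-1},
variable Some (l,i,j) is the (i,j) entry of delta^l g.\<close>

definition GL_point :: "nat \<Rightarrow> ('r::idom \<Rightarrow> 'r) \<Rightarrow> 'r^'n^'n \<Rightarrow> (nat \<times> 'n \<times> 'n) option \<Rightarrow> 'r" where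
  "GL_point p \<phi> g v = (case v of None \<Rightarrow> ring_inv (det g)
                        | Some (l, i, j) \<Rightarrow> (delta p \<phi> ^^ l) (g $ i $ j))"

definition delta_map_GL :: "nat \<Rightarrow> ('r::idom \<Rightarrow> 'r) \<Rightarrow> ('r^'n^'n \<Rightarrow> 'r^'n^'n) \<Rightarrow> bool" where
  "delta_map_GL p \<phi> f \<longleftrightarrow>
     (\<exists>(m::nat) (F :: 'n \<Rightarrow> 'n \<Rightarrow> (((nat \<times> 'n \<times> 'n) option \<Rightarrow> nat) \<Rightarrow> 'r)).
        (\<forall>i j. rps p {v. case v of None \<Rightarrow> True | Some (l, _, _) \<Rightarrow> l \<le> m} (F i j)) \<and>
        (\<forall>g\<in>GL_set. \<forall>i j. rps_val p (F i j) (GL_point p \<phi> g) (f g $ i $ j)))"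

definition Gm_point :: "nat \<Rightarrow> ('r::idom \<Rightarrow> 'r) \<Rightarrow> 'r \<Rightarrow> nat option \<Rightarrow> 'r" where
  "Gm_point p \<phi> u v = (case v of None \<Rightarrow> ring_inv u | Some l \<Rightarrow> (delta p \<phi> ^^ l) u)"

definition delta_map_Gm :: "nat \<Rightarrow> ('r::idom \<Rightarrow> 'r) \<Rightarrow> ('r \<Rightarrow> 'r) \<Rightarrow> bool" where
  "delta_map_Gm p \<phi> w \<longleftrightarrow>
     (\<exists>(m::nat) (G :: (nat option \<Rightarrow> nat) \<Rightarrow> 'r).
        rps p {v. case v of None \<Rightarrow> True | Some l \<Rightarrow> l \<le> m} G \<and>
        (\<forall>u. runit u \<longrightarrow> rps_val p G (Gm_point p \<phi> u) (w u)))"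

definition delta_hom_Gm_Ga :: "nat \<Rightarrow> ('r::idom \<Rightarrow> 'r) \<Rightarrow> ('r \<Rightarrow> 'r) \<Rightarrow> bool" where
  "delta_hom_Gm_Ga p \<phi> w \<longleftrightarrow>
     (\<forall>u v. runit u \<longrightarrow> runit v \<longrightarrow> w (u * v) = w u + w v) \<and> delta_map_Gm p \<phi> w"

end

theory Submission
  imports Defs
begin


lemma runit_mult: "runit (a::'r::idom) \<Longrightarrow> runit b \<Longrightarrow> runit (a*b)"
proof -
  assume "runit a" "runit b"
  then obtain x y where "a * x = 1" "b * y = 1" unfolding runit_def by blast
  then have "(a*b) * (x*y) = 1" by (simp add: algebra_simps)
  then show ?thesis unfolding runit_def by blast
qed

lemma ring_inv_eq: assumes "(u::'r::idom) * v = 1" shows "ring_inv u = v"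
proof -
  have "\<And>w. u * w = 1 \<Longrightarrow> w = v"
  proof -
    fix w assume "u * w = 1"
    have "w = (v * u) * w" using assms by (simp add: mult.commute)
    also have "\<dots> = v * (u * w)" by (simp add: mult.assoc)
    finally show "w = v" using \<open>u * w = 1\<close> by simp
  qed
  then show ?thesis unfolding ring_inv_def using assms by (intro the_equality) blast+
qed

lemma ring_inv_r: "runit (u::'r::idom) \<Longrightarrow> u * ring_inv u = 1"
  unfolding runit_def using ring_inv_eq by blast

lemma ring_inv_l: "runit (u::'r::idom) \<Longrightarrow> ring_inv u * u = 1"
  using ring_inv_r by (metis mult.commute)

lemma runit_inv: "runit (u::'r::idom) \<Longrightarrow> runit (ring_inv u)"
  using ring_inv_l unfolding runit_def by blast

lemma runit_one[simp]: "runit (1::'r::idom)" unfolding runit_def by auto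

definition adj :: "'r::comm_ring_1^'n^'n \<Rightarrow> 'r^'n^'n" where
  "adj A = (\<chi> i y. det (\<chi> k. if k = y then axis i 1 else A$k))"

lemma basis_exp: "(\<Sum>i\<in>UNIV. (x::'r::comm_ring_1^'n)$i *s axis i 1) = x"
  by (simp add: vec_eq_iff sum_component axis_def if_distrib cong: if_cong)

lemma mult_adj: "(A::'r::comm_ring_1^'n^'n) ** adj A = mat (det A)"
proof -
  have "(A ** adj A)$x$y = (if x = y then det A else 0)" for x y
  proof -
    have "(A ** adj A)$x$y = (\<Sum>i\<in>UNIV. A$x$i * det (\<chi> k. if k = y then axis i 1 else A$k))"
      by (simp add: matrix_matrix_mult_def adj_def)
    also have "\<dots> = (\<Sum>i\<in>UNIV. det (\<chi> k. if k = y then A$x$i *s axis i 1 else A$k))"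
      by (simp add: det_row_mul)
    also have "\<dots> = det (\<chi> k. if k = y then (\<Sum>i\<in>UNIV. A$x$i *s axis i 1) else A$k)"
      by (rule det_linear_row_sum[symmetric]) simp
    also have "\<dots> = det (\<chi> k. if k = y then A$x else A$k)" unfolding basis_exp ..
    also have "\<dots> = (if x = y then det A else 0)"
    proof (cases "x = y")
      case True
      have "(\<chi> k. if k = y then A$x else A$k) = A" using True by (simp add: vec_eq_iff)
      then show ?thesis using True by simp
    next
      case False
      have "row x (\<chi> k. if k = y then A$x else A$k) = row y (\<chi> k. if k = y then A$x else A$k)"
        using False by (simp add: row_def vec_eq_iff)
      then show ?thesis using False det_identical_rows by (metis (no_types, lifting))
    qed
    finally show ?thesis .
  qed
  then show ?thesis by (simp add: vec_eq_iff mat_def)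
qed

lemma mat_mult_mat: "(mat a :: 'r::comm_ring_1^'n^'n) ** mat b = mat (a*b)"
proof -
  have "(mat a ** mat b :: 'r^'n^'n)$i$j = mat (a*b) $i$j" for i j
  proof -
    have "(mat a ** mat b :: 'r^'n^'n)$i$j = (\<Sum>k\<in>UNIV. (if i = k then a else 0) * (if k = j then b else 0))"
      unfolding matrix_matrix_mult_def mat_def by simp
    also have "\<dots> = (\<Sum>k\<in>UNIV. if k = i then (if i = j then a * b else 0) else 0)"
      by (rule sum.cong) auto
    also have "\<dots> = mat (a*b) $i$j" by (simp add: mat_def)
    finally show ?thesis .
  qed
  then show ?thesis by (simp add: vec_eq_iff)
qed

lemma right_inv_exists:
  assumes "runit (det (A::'r::idom^'n^'n))"
  shows "\<exists>B. A ** B = mat 1"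
proof -
  let ?B = "adj A ** mat (ring_inv (det A))"
  have "A ** ?B = mat (det A) ** mat (ring_inv (det A))"
    by (simp add: matrix_mul_assoc mult_adj)
  also have "\<dots> = mat 1" using ring_inv_r[OF assms] by (simp add: mat_mult_mat)
  finally show ?thesis by blast
qed

lemma GL_inv_exists:
  assumes "runit (det (A::'r::idom^'n^'n))"
  shows "\<exists>B. A ** B = mat 1 \<and> B ** A = mat 1"
proof -
  obtain B where B: "A ** B = mat 1" using right_inv_exists[OF assms] by blast
  have "det A * det B = 1" using B det_mul[of A B] by simp
  then have "runit (det B)" unfolding runit_def by (metis mult.commute)
  then obtain C where C: "B ** C = mat 1" using right_inv_exists by blast
  have "A = A ** (B ** C)" using C by simp
  also have "\<dots> = (A ** B) ** C" by (simp add: matrix_mul_assoc)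
  finally have "C = A" using B by simp
  then show ?thesis using B C by blast
qed

lemma mat_inv_eq:
  assumes "(A::'r::idom^'n^'n) ** B = mat 1" "B ** A = mat 1"
  shows "mat_inv A = B"
proof -
  have "\<And>C. A ** C = mat 1 \<and> C ** A = mat 1 \<Longrightarrow> C = B"
  proof -
    fix C assume "A ** C = mat 1 \<and> C ** A = mat 1"
    then have "C = C ** (A ** B)" using assms by simp
    also have "\<dots> = (C ** A) ** B" by (simp add: matrix_mul_assoc)
    finally show "C = B" using \<open>A ** C = mat 1 \<and> C ** A = mat 1\<close> by simp
  qed
  then show ?thesis unfolding mat_inv_def using assms by (intro the_equality) blast+
qed

lemma GL_inv:
  assumes "A \<in> (GL_set :: ('r::idom^'n^'n) set)"
  shows "A ** mat_inv A = mat 1" "mat_inv A ** A = mat 1"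
  using GL_inv_exists[of A] assms mat_inv_eq unfolding GL_set_def by blast+

lemma GL_mult: "A \<in> GL_set \<Longrightarrow> B \<in> GL_set \<Longrightarrow> A ** B \<in> (GL_set :: ('r::idom^'n^'n) set)"
  unfolding GL_set_def by (simp add: det_mul runit_mult)

lemma GL_I: "A ** B = mat 1 \<Longrightarrow> (A::'r::idom^'n^'n) \<in> GL_set"
proof -
  assume "A ** B = mat 1"
  then have "det A * det B = 1" by (metis det_I det_mul)
  then show ?thesis unfolding GL_set_def runit_def by blast
qed

lemma GL_inv_mem: "A \<in> GL_set \<Longrightarrow> mat_inv A \<in> (GL_set :: ('r::idom^'n^'n) set)"
proof -
  assume "A \<in> GL_set"
  then have "mat_inv A ** A = mat 1" by (rule GL_inv)
  then show ?thesis by (rule GL_I)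
qed

lemma mat_inv_mult: "A \<in> GL_set \<Longrightarrow> B \<in> GL_set \<Longrightarrow>
   mat_inv (A ** B) = mat_inv B ** mat_inv (A::'r::idom^'n^'n)"
proof (rule mat_inv_eq)
  assume a: "A \<in> GL_set" "B \<in> GL_set"
  have "A ** B ** (mat_inv B ** mat_inv A) = A ** (B ** mat_inv B) ** mat_inv A"
    by (simp add: matrix_mul_assoc)
  then show "A ** B ** (mat_inv B ** mat_inv A) = mat 1" using GL_inv[OF a(1)] GL_inv[OF a(2)] by simp
  have "mat_inv B ** mat_inv A ** (A ** B) = mat_inv B ** (mat_inv A ** A) ** B"
    by (simp add: matrix_mul_assoc)
  then show "mat_inv B ** mat_inv A ** (A ** B) = mat 1" using GL_inv[OF a(1)] GL_inv[OF a(2)] by simp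
qed


lemma matrix_add_rdistrib: "((B + C) ** (A::'r::comm_ring_1^'n^'n)) = B ** A + C ** A"
  by (simp add: vec_eq_iff matrix_matrix_mult_def distrib_right sum.distrib)
lemma matrix_diff_ldistrib: "((A::'r::comm_ring_1^'n^'n) ** (B - C)) = A ** B - A ** C"
  by (simp add: vec_eq_iff matrix_matrix_mult_def right_diff_distrib sum_subtractf)
lemma matrix_diff_rdistrib: "((B - C) ** (A::'r::comm_ring_1^'n^'n)) = B ** A - C ** A"
  by (simp add: vec_eq_iff matrix_matrix_mult_def left_diff_distrib sum_subtractf)
lemma matrix_mul_mat_left: "(mat c ** (A::'r::comm_ring_1^'n^'n))$x$y = c * A$x$y"
proof -
  have "(mat c ** A)$x$y = (\<Sum>k\<in>UNIV. (if x = k then c else 0) * A$k$y)"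
    by (simp add: matrix_matrix_mult_def mat_def)
  also have "\<dots> = (\<Sum>k\<in>UNIV. if k = x then c * A$x$y else 0)" by (rule sum.cong) auto
  finally show ?thesis by simp
qed
lemma matrix_mul_mat_right: "((A::'r::comm_ring_1^'n^'n) ** mat c)$x$y = A$x$y * c"
proof -
  have "(A ** mat c)$x$y = (\<Sum>k\<in>UNIV. A$x$k * (if k = y then c else 0))"
    by (simp add: matrix_matrix_mult_def mat_def)
  also have "\<dots> = (\<Sum>k\<in>UNIV. if k = y then A$x$y * c else 0)" by (rule sum.cong) auto
  finally show ?thesis by simp
qed
lemma mat_comm: "(A::'r::comm_ring_1^'n^'n) ** mat c = mat c ** A"
  by (simp add: vec_eq_iff matrix_mul_mat_left matrix_mul_mat_right mult.commute)

definition Ad :: "'r::idom^'n^'n \<Rightarrow> 'r^'n^'n \<Rightarrow> 'r^'n^'n" where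
  "Ad g X = g ** X ** mat_inv g"

definition cob :: "'r::idom^'n^'n \<Rightarrow> 'r^'n^'n \<Rightarrow> 'r^'n^'n" where
  "cob v g = Ad g v - v"

definition cocyc :: "('r::idom^'n^'n \<Rightarrow> 'r^'n^'n) \<Rightarrow> bool" where
  "cocyc f \<longleftrightarrow> (\<forall>g1\<in>GL_set. \<forall>g2\<in>GL_set. f (g1 ** g2) = f g1 + Ad g1 (f g2))"

lemma Ad_add: "Ad g (X + Y) = Ad g X + Ad g Y"
  by (simp add: Ad_def matrix_add_ldistrib matrix_add_rdistrib)
lemma Ad_diff: "Ad g (X - Y) = Ad g X - Ad g Y"
  by (simp add: Ad_def matrix_diff_ldistrib matrix_diff_rdistrib)
lemma Ad_zero[simp]: "Ad g 0 = 0"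
  using Ad_diff[of g 0 0] by simp
lemma Ad_uminus: "Ad g (- X) = - Ad g X"
  using Ad_diff[of g 0 X] by simp
lemma Ad_mat: "g \<in> GL_set \<Longrightarrow> Ad g (mat c) = mat c"
proof -
  assume g: "g \<in> GL_set"
  have "Ad g (mat c) = (g ** mat c) ** mat_inv g" unfolding Ad_def ..
  also have "g ** mat c = mat c ** g" by (rule mat_comm)
  also have "(mat c ** g) ** mat_inv g = mat c ** (g ** mat_inv g)" by (simp add: matrix_mul_assoc)
  finally show ?thesis using GL_inv(1)[OF g] by simp
qed
lemma Ad_mult: "g \<in> GL_set \<Longrightarrow> h \<in> GL_set \<Longrightarrow> Ad (g ** h) X = Ad g (Ad h X)"
  unfolding Ad_def by (simp add: mat_inv_mult matrix_mul_assoc)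
lemma Ad_one[simp]: "Ad (mat 1) X = X"
proof -
  have "mat_inv (mat 1 :: 'a::idom^'b^'b) = mat 1" by (rule mat_inv_eq) auto
  then show ?thesis by (simp add: Ad_def)
qed
lemma Ad_inv: "g \<in> GL_set \<Longrightarrow> Ad (mat_inv g) (Ad g X) = X"
proof -
  assume g: "g \<in> GL_set"
  have "Ad (mat_inv g) (Ad g X) = Ad (mat_inv g ** g) X" using Ad_mult[OF GL_inv_mem[OF g] g] by simp
  then show ?thesis using GL_inv(2)[OF g] by simp
qed
lemma GL_one: "mat 1 \<in> GL_set" by (rule GL_I[of _ "mat 1"]) simp

lemma cocyc_one: assumes "cocyc f" shows "f (mat 1) = 0"
proof -
  have "f (mat 1 ** mat 1) = f (mat 1) + Ad (mat 1) (f (mat 1))"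
    using assms GL_one unfolding cocyc_def by blast
  then show ?thesis by simp
qed

lemma cocyc_inv: assumes "cocyc f" "g \<in> GL_set"
  shows "f (mat_inv g) = - Ad (mat_inv g) (f g)"
proof -
  have "f (mat_inv g ** g) = f (mat_inv g) + Ad (mat_inv g) (f g)"
    using assms GL_inv_mem unfolding cocyc_def by blast
  then have "0 = f (mat_inv g) + Ad (mat_inv g) (f g)" using cocyc_one[OF assms(1)] GL_inv[OF assms(2)] by simp
  then show ?thesis by (simp add: eq_neg_iff_add_eq_0)
qed

lemma cocyc_comm: assumes "cocyc f" "g \<in> GL_set" "h \<in> GL_set" "g ** h = h ** g"
  shows "f g + Ad g (f h) = f h + Ad h (f g)"
proof -
  have "f (g ** h) = f g + Ad g (f h)" "f (h ** g) = f h + Ad h (f g)" using assms unfolding cocyc_def by blast+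
  then show ?thesis using assms(4) by simp
qed

lemma cocyc_conj: assumes "cocyc f" "g \<in> GL_set" "h \<in> GL_set"
  shows "f (h ** g ** mat_inv h) = f h + Ad h (f g) - Ad (h ** g ** mat_inv h) (f h)"
proof -
  have hg: "h ** g \<in> GL_set" using assms GL_mult by blast
  have "f (h ** g ** mat_inv h) = f (h ** g) + Ad (h ** g) (f (mat_inv h))"
    using assms hg GL_inv_mem unfolding cocyc_def by blast
  also have "f (h ** g) = f h + Ad h (f g)" using assms unfolding cocyc_def by blast
  also have "Ad (h ** g) (f (mat_inv h)) = - Ad (h ** g) (Ad (mat_inv h) (f h))"
    using cocyc_inv[OF assms(1,3)] by (simp add: Ad_uminus)
  also have "Ad (h ** g) (Ad (mat_inv h) (f h)) = Ad (h ** g ** mat_inv h) (f h)"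
    using Ad_mult[OF hg GL_inv_mem[OF assms(3)]] by simp
  finally show ?thesis by simp
qed

lemma cocyc_sub_cob: assumes "cocyc f" shows "cocyc (\<lambda>g. f g - cob v g)"
  unfolding cocyc_def
proof (intro ballI)
  fix g1 g2 :: "'a^'b^'b" assume a: "g1 \<in> GL_set" "g2 \<in> GL_set"
  have "f (g1 ** g2) = f g1 + Ad g1 (f g2)" using assms a unfolding cocyc_def by blast
  moreover have "cob v (g1 ** g2) = cob v g1 + Ad g1 (cob v g2)"
    unfolding cob_def using a by (simp add: Ad_mult Ad_diff)
  ultimately show "f (g1 ** g2) - cob v (g1 ** g2) = f g1 - cob v g1 + Ad g1 (f g2 - cob v g2)"
    by (simp add: Ad_diff)
qed

lemma cob_add: "cob (v + w) g = cob v g + cob w g"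
  unfolding cob_def by (simp add: Ad_add)


definition dg :: "('n::finite \<Rightarrow> 'r::idom) \<Rightarrow> 'r^'n^'n" where
  "dg x = (\<chi> a b. if a = b then x a else 0)"
definition el :: "'n::finite \<Rightarrow> 'n \<Rightarrow> 'r::idom \<Rightarrow> 'r^'n^'n" where
  "el i j c = (\<chi> a b. (if a = b then 1 else 0) + (if a = i \<and> b = j then c else 0))"
definition tr :: "'n \<Rightarrow> 'n \<Rightarrow> 'n \<Rightarrow> 'n" where
  "tr i j a = (if a = i then j else if a = j then i else a)"
definition sw :: "'n::finite \<Rightarrow> 'n \<Rightarrow> 'r::idom^'n^'n" where
  "sw i j = (\<chi> a b. if b = tr i j a then 1 else 0)"

lemma tr_tr[simp]: "tr i j (tr i j a) = a" unfolding tr_def by auto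
lemma tr_eq_iff: "tr i j a = b \<longleftrightarrow> a = tr i j b" unfolding tr_def by auto

lemma dg_mult_left: "(dg x ** B)$a$b = x a * B$a$b"
proof -
  have "(dg x ** B)$a$b = (\<Sum>k\<in>UNIV. (if a = k then x a else 0) * B$k$b)"
    by (simp add: matrix_matrix_mult_def dg_def)
  also have "\<dots> = (\<Sum>k\<in>UNIV. if k = a then x a * B$a$b else 0)" by (rule sum.cong) auto
  finally show ?thesis by simp
qed
lemma dg_mult_right: "(B ** dg x)$a$b = B$a$b * x b"
proof -
  have "(B ** dg x)$a$b = (\<Sum>k\<in>UNIV. B$a$k * (if k = b then x k else 0))"
    by (simp add: matrix_matrix_mult_def dg_def)
  also have "\<dots> = (\<Sum>k\<in>UNIV. if k = b then B$a$b * x b else 0)" by (rule sum.cong) auto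
  finally show ?thesis by simp
qed
lemma el_mult_left: "(el i j c ** B)$a$b = B$a$b + (if a = i then c * B$j$b else 0)"
proof -
  have "(el i j c ** B)$a$b = (\<Sum>k\<in>UNIV. ((if a = k then 1 else 0) + (if a = i \<and> k = j then c else 0)) * B$k$b)"
    by (simp add: matrix_matrix_mult_def el_def)
  also have "\<dots> = (\<Sum>k\<in>UNIV. (if k = a then B$a$b else 0) + (if k = j then (if a = i then c * B$j$b else 0) else 0))"
    by (rule sum.cong) (auto simp: distrib_right)
  also have "\<dots> = B$a$b + (if a = i then c * B$j$b else 0)" by (simp add: sum.distrib)
  finally show ?thesis .
qed
lemma el_mult_right: "(B ** el i j c)$a$b = B$a$b + (if b = j then B$a$i * c else 0)"
proof -
  have "(B ** el i j c)$a$b = (\<Sum>k\<in>UNIV. B$a$k * ((if k = b then 1 else 0) + (if k = i \<and> b = j then c else 0)))"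
    by (simp add: matrix_matrix_mult_def el_def)
  also have "\<dots> = (\<Sum>k\<in>UNIV. (if k = b then B$a$b else 0) + (if k = i then (if b = j then B$a$i * c else 0) else 0))"
    by (rule sum.cong) (auto simp: distrib_left)
  also have "\<dots> = B$a$b + (if b = j then B$a$i * c else 0)" by (simp add: sum.distrib)
  finally show ?thesis .
qed
lemma sw_mult_left: "(sw i j ** B)$a$b = B$(tr i j a)$b"
proof -
  have "(sw i j ** B)$a$b = (\<Sum>k\<in>UNIV. (if k = tr i j a then 1 else 0) * B$k$b)"
    by (simp add: matrix_matrix_mult_def sw_def)
  also have "\<dots> = (\<Sum>k\<in>UNIV. if k = tr i j a then B$(tr i j a)$b else 0)" by (rule sum.cong) auto
  finally show ?thesis by simp
qed
lemma sw_mult_right: "(B ** sw i j)$a$b = B$a$(tr i j b)"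
proof -
  have "(B ** sw i j)$a$b = (\<Sum>k\<in>UNIV. B$a$k * (if b = tr i j k then 1 else 0))"
    by (simp add: matrix_matrix_mult_def sw_def)
  also have "\<dots> = (\<Sum>k\<in>UNIV. if k = tr i j b then B$a$(tr i j b) else 0)"
    by (rule sum.cong) (auto simp: tr_eq_iff)
  finally show ?thesis by simp
qed

lemma mat1_entry: "(mat 1 :: 'r::idom^'n^'n)$a$b = (if a = b then 1 else 0)"
  by (simp add: mat_def)

lemma dg_inv_mult: assumes "\<And>a. runit (x a)"
  shows "dg x ** dg (\<lambda>a. ring_inv (x a)) = mat 1" "dg (\<lambda>a. ring_inv (x a)) ** dg x = mat 1"
  by (simp_all add: vec_eq_iff dg_mult_left, simp_all add: dg_def mat_def ring_inv_r ring_inv_l assms)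

lemma dg_GL: "(\<And>a. runit (x a)) \<Longrightarrow> dg x \<in> GL_set"
  using dg_inv_mult GL_I by blast
lemma mat_inv_dg: "(\<And>a. runit (x a)) \<Longrightarrow> mat_inv (dg x) = dg (\<lambda>a. ring_inv (x a))"
  using dg_inv_mult mat_inv_eq by blast

lemma el_el: "i \<noteq> j \<Longrightarrow> el i j c ** el i j d = el i j (c + d)"
  by (simp add: vec_eq_iff el_mult_left) (simp add: el_def)
lemma el_zero: "el i j 0 = mat 1" by (simp add: vec_eq_iff el_def mat_def)
lemma el_GL: "i \<noteq> j \<Longrightarrow> el i j c \<in> GL_set"
  using el_el[of i j c "-c"] el_zero GL_I by (metis add.right_inverse)
lemma mat_inv_el: "i \<noteq> j \<Longrightarrow> mat_inv (el i j c) = el i j (-c)"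
  using el_el[of i j c "-c"] el_el[of i j "-c" c] el_zero mat_inv_eq
  by (metis add.right_inverse add.left_inverse)

lemma sw_sw: "sw i j ** sw i j = mat 1"
  by (simp add: vec_eq_iff sw_mult_left) (simp add: sw_def mat_def tr_eq_iff)
lemma sw_GL: "sw i j \<in> GL_set" using sw_sw GL_I by blast
lemma mat_inv_sw: "mat_inv (sw i j) = sw i j" using sw_sw mat_inv_eq by blast

lemma Ad_dg: "(\<And>a. runit (x a)) \<Longrightarrow> (Ad (dg x) Y)$a$b = x a * Y$a$b * ring_inv (x b)"
  by (simp add: Ad_def mat_inv_dg dg_mult_left dg_mult_right)
lemma Ad_el: "i \<noteq> j \<Longrightarrow> (Ad (el i j c) Y)$a$b = Y$a$b + (if a = i then c * Y$j$b else 0)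
   - (if b = j then (Y$a$i + (if a = i then c * Y$j$i else 0)) * c else 0)"
  by (simp add: Ad_def mat_inv_el el_mult_left el_mult_right)
lemma Ad_sw: "(Ad (sw i j) Y)$a$b = Y$(tr i j a)$(tr i j b)"
  by (simp add: Ad_def mat_inv_sw sw_mult_left sw_mult_right)

lemma det_dg: "det (dg x) = (\<Prod>a\<in>UNIV. x a)"
  by (subst det_diagonal) (simp_all add: dg_def)

lemma det_el: fixes c :: "'r::idom" and i j :: "'n::finite" assumes "i \<noteq> j" shows "det (el i j c) = 1"
proof -
  have "el i j c = ((\<chi> k. if k = i then row i (mat 1) + c *s row j (mat 1) else row k (mat 1)) :: 'r^'n^'n)"
    using assms by (simp add: vec_eq_iff el_def row_def mat_def)
  then show ?thesis using det_row_operation[OF assms, of "mat 1" c] by simp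
qed


lemma ds_basic:
  assumes "delta_setting p (\<phi>::'r::idom \<Rightarrow> 'r)"
  shows "prime p" "odd p" "(of_nat p :: 'r) \<noteq> 0" "\<not> runit (of_nat p :: 'r)"
    "\<And>x::'r. x \<noteq> 0 \<Longrightarrow> \<exists>u k. runit u \<and> x = u * of_nat p ^ k"
  using assms unfolding delta_setting_def by blast+

lemma ds_nodvd_one: assumes "delta_setting p (\<phi>::'r::idom \<Rightarrow> 'r)"
  shows "\<not> (of_nat p :: 'r) dvd 1"
proof
  assume "(of_nat p :: 'r) dvd 1"
  then obtain c where "1 = (of_nat p :: 'r) * c" unfolding dvd_def by blast
  then have "runit (of_nat p :: 'r)" unfolding runit_def by (intro exI[of _ c]) simp
  then show False using ds_basic(4)[OF assms] by blast
qed

lemma ds_unit_iff: fixes x :: "'r::idom" assumes "delta_setting p (\<phi>::'r::idom \<Rightarrow> 'r)"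
  shows "runit x \<longleftrightarrow> \<not> (of_nat p :: 'r) dvd x"
proof (rule iffI notI)+
  assume "runit x" "of_nat p dvd x"
  then obtain y c where "x * y = 1" "x = of_nat p * c" unfolding runit_def dvd_def by blast
  then have "of_nat p * (c * y) = 1" by (simp add: mult.assoc)
  then have "(of_nat p :: 'r) dvd 1" unfolding dvd_def by (intro exI[of _ "c * y"]) simp
  then show False using ds_nodvd_one[OF assms] by blast
next
  assume nd: "\<not> (of_nat p :: 'r) dvd x"
  then have "x \<noteq> 0" by auto
  then obtain u k where u: "runit u" "x = u * of_nat p ^ k" using ds_basic(5)[OF assms] by blast
  show "runit x"
  proof (cases k)
    case 0 then show ?thesis using u by simp
  next
    case (Suc k') then have "x = of_nat p * (u * of_nat p ^ k')" using u by (simp add: ac_simps)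
    then show ?thesis using nd by auto
  qed
qed

lemma ds_separated: fixes x :: "'r::idom" assumes "delta_setting p (\<phi>::'r::idom \<Rightarrow> 'r)"
  and "\<forall>k. (of_nat p :: 'r) ^ k dvd x" shows "x = 0"
proof (rule ccontr)
  assume "x \<noteq> 0"
  then obtain u k where u: "runit u" "x = u * of_nat p ^ k" using ds_basic(5)[OF assms(1)] by blast
  obtain c where c: "x = of_nat p ^ Suc k * c" using assms(2) unfolding dvd_def by blast
  have nz: "(of_nat p :: 'r) ^ k \<noteq> 0" using ds_basic(3)[OF assms(1)] by simp
  have "of_nat p ^ k * u = u * of_nat p ^ k" by (rule mult.commute)
  also have "\<dots> = x" using u by simp
  also have "\<dots> = of_nat p ^ Suc k * c" using c by simp
  also have "\<dots> = of_nat p ^ k * (of_nat p * c)" by (simp only: power_Suc2 mult.assoc)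
  finally have "of_nat p ^ k * u = of_nat p ^ k * (of_nat p * c)" .
  then have "u = of_nat p * c" using mult_left_cancel[OF nz] by blast
  then show False using u ds_unit_iff[OF assms(1)] by auto
qed

lemma ds_coprime_unit: assumes "delta_setting p (\<phi>::'r::idom \<Rightarrow> 'r)" and "coprime m p"
  shows "runit (of_nat m :: 'r)"
proof -
  have pr: "prime p" using ds_basic(1)[OF assms(1)] .
  have "m \<noteq> 0"
  proof
    assume "m = 0" then have "p = 1" using assms(2) by simp
    then show False using pr by simp
  qed
  then obtain x y where xy: "m * x = p * y + gcd m p" using bezout_nat by blast
  then have "m * x = p * y + 1" using assms(2) by simp
  then have "(of_nat (m * x) :: 'r) = of_nat (p * y + 1)" by simp
  then have e: "(of_nat m :: 'r) * of_nat x = of_nat p * of_nat y + 1" by simp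
  show ?thesis
  proof (subst ds_unit_iff[OF assms(1)], rule notI)
    assume "(of_nat p :: 'r) dvd of_nat m"
    then have "(of_nat p :: 'r) dvd of_nat m * of_nat x - of_nat p * of_nat y" by auto
    then show False using e ds_nodvd_one[OF assms(1)] by simp
  qed
qed

lemma ds_two: assumes "delta_setting p (\<phi>::'r::idom \<Rightarrow> 'r)"
  shows "runit (2::'r)"
proof -
  have "coprime (2::nat) p" using ds_basic(2)[OF assms] by simp
  then have "runit (of_nat 2 :: 'r)" using ds_coprime_unit[OF assms] by blast
  then show ?thesis by simp
qed

lemma ds_of_nat_nz: assumes "delta_setting p (\<phi>::'r::idom \<Rightarrow> 'r)"
  shows "m > 0 \<Longrightarrow> (of_nat m :: 'r) \<noteq> 0"
proof (induction m rule: less_induct)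
  case (less m)
  have pr: "prime p" using ds_basic(1)[OF assms] .
  show ?case
  proof (cases "p dvd m")
    case True
    then obtain m' where m': "m = p * m'" by blast
    have "p > 1" using pr prime_gt_1_nat by blast
    then have "m' < m" "m' > 0" using less.prems m' by auto
    then have "(of_nat m' :: 'r) \<noteq> 0" using less.IH by blast
    then show ?thesis using m' ds_basic(3)[OF assms] by simp
  next
    case False
    then have "coprime m p" using prime_imp_coprime[OF pr] by (simp add: coprime_commute)
    then have "runit (of_nat m :: 'r)" using ds_coprime_unit[OF assms] by blast
    then show ?thesis unfolding runit_def by auto
  qed
qed

lemma ds_unit_or_pred: fixes x :: "'r::idom" assumes "delta_setting p (\<phi>::'r::idom \<Rightarrow> 'r)"
  shows "runit x \<or> runit (x - 1)"
proof (cases "runit x")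
  case False
  then have "(of_nat p :: 'r) dvd x" using ds_unit_iff[OF assms] by blast
  moreover have "\<not> (of_nat p :: 'r) dvd 1" using ds_nodvd_one[OF assms] .
  moreover have "(of_nat p :: 'r) dvd (x - 1) \<Longrightarrow> (of_nat p :: 'r) dvd x \<Longrightarrow> (of_nat p :: 'r) dvd 1"
  proof -
    assume "(of_nat p :: 'r) dvd (x - 1)" "(of_nat p :: 'r) dvd x"
    then have "(of_nat p :: 'r) dvd (x - (x - 1))" by (rule dvd_diff[rotated])
    then show ?thesis by simp
  qed
  ultimately have "\<not> (of_nat p :: 'r) dvd (x - 1)" by blast
  then show ?thesis using ds_unit_iff[OF assms] by blast
qed simp

lemma dvd_pow_diff: "((a::'r::comm_ring_1) - b) dvd (a ^ n - b ^ n)"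
proof (induction n)
  case (Suc n)
  have "a ^ Suc n - b ^ Suc n = a * (a ^ n - b ^ n) + (a - b) * b ^ n" by (simp add: algebra_simps)
  then show ?case using Suc by simp
qed simp

lemma derivation_zero: fixes D :: "'r::idom \<Rightarrow> 'r" and x :: 'r
  assumes ds: "delta_setting p (\<phi>::'r::idom \<Rightarrow> 'r)"
    and add: "\<And>a b. D (a + b) = D a + D b"
    and leib: "\<And>s a. runit s \<Longrightarrow> D (s * a) = s * D a + a * D s"
  shows "D x = 0"
proof -
  let ?P = "of_nat p :: 'r"
  have D0: "D 0 = 0" using add[of 0 0] by (simp only: add_0 add_cancel_right_right)
  have D1: "D 1 = 0" using leib[OF runit_one, of 1] by (simp only: mult_1 mult_1_right add_cancel_right_right)
  have Dnat: "D (of_nat n) = 0" for n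
    by (induction n) (simp_all add: D0 D1 add)
  have L: "D (y * a) = y * D a + a * D y" for y a
  proof (cases "runit y")
    case True then show ?thesis by (rule leib)
  next
    case False
    then have u: "runit (y - 1)" using ds_unit_or_pred[OF ds] by blast
    have "D (y * a) = D ((y - 1) * a + a)" by (simp add: algebra_simps)
    also have "\<dots> = (y - 1) * D a + a * D (y - 1) + D a" using add leib[OF u] by simp
    finally have e1: "D (y * a) = (y - 1) * D a + a * D (y - 1) + D a" .
    have "D y = D ((y - 1) + 1)" by simp
    also have "\<dots> = D (y - 1) + D 1" by (rule add)
    finally have e2: "D y = D (y - 1)" using D1 by simp
    show ?thesis using e1 e2 by (simp add: algebra_simps)
  qed
  have Dpow: "D (y ^ Suc n) = of_nat (Suc n) * y ^ n * D y" for y n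
  proof (induction n)
    case (Suc n)
    have "D (y ^ Suc (Suc n)) = D (y * y ^ Suc n)" by simp
    also have "\<dots> = y * D (y ^ Suc n) + y ^ Suc n * D y" by (rule L)
    finally show ?case using Suc by (simp add: algebra_simps)
  qed simp
  have main: "\<forall>y. ?P ^ m dvd D y" for m
  proof (induction m)
    case (Suc m)
    show ?case
    proof
      fix y
      obtain k where k: "k \<ge> 1" "?P dvd (y ^ (p ^ k) - y)" using ds unfolding delta_setting_def by blast
      define q where "q = p ^ k"
      have cong: "?P dvd (y ^ (q ^ j) - y)" for j
      proof (induction j)
        case (Suc j)
        have "(y ^ (q ^ j)) ^ q - y ^ q = (y ^ q ^ Suc j - y ^ q)" by (simp add: power_mult[symmetric] mult.commute)
        moreover have "?P dvd ((y ^ (q ^ j)) ^ q - y ^ q)"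
          using dvd_trans[OF Suc dvd_pow_diff] by blast
        ultimately have "?P dvd (y ^ q ^ Suc j - y ^ q)" by simp
        moreover have "?P dvd (y ^ q - y)" using k(2) q_def by simp
        ultimately have "?P dvd ((y ^ q ^ Suc j - y ^ q) + (y ^ q - y))" by (rule dvd_add)
        then show ?case by simp
      qed simp
      define N where "N = q ^ Suc m"
      have "?P dvd (y - y ^ N)" using cong[of "Suc m"] unfolding N_def
        by (metis dvd_minus_iff minus_diff_eq)
      then obtain z where z: "y - y ^ N = ?P * z" unfolding dvd_def by blast
      have Npos: "N > 0" using ds_basic(1)[OF ds] unfolding N_def q_def by (simp add: prime_gt_0_nat)
      then obtain N' where N': "N = Suc N'" by (cases N) auto
      have "y = y ^ N + ?P * z" using z by (simp add: algebra_simps)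
      then have "D y = D (y ^ N + ?P * z)" by simp
      also have "\<dots> = D (y ^ N) + D (?P * z)" by (rule add)
      also have "D (?P * z) = ?P * D z" using L[of ?P z] Dnat by simp
      also have "D (y ^ N) = of_nat N * y ^ N' * D y" using Dpow N' by simp
      finally have eq: "D y = of_nat N * y ^ N' * D y + ?P * D z" .
      have "1 * Suc m \<le> k * Suc m" using k(1) by (rule mult_le_mono1)
      then have "Suc m \<le> k * Suc m" by simp
      then have "p ^ Suc m dvd p ^ (k * Suc m)" by (rule le_imp_power_dvd)
      moreover have "N = p ^ (k * Suc m)" unfolding N_def q_def by (rule power_mult[symmetric])
      ultimately obtain e where "N = p ^ Suc m * e" unfolding dvd_def by auto
      then have "(of_nat N :: 'r) = ?P ^ Suc m * of_nat e" by simp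
      then have d1: "?P ^ Suc m dvd of_nat N" by simp
      have d2: "?P ^ Suc m dvd ?P * D z" using Suc.IH by simp
      have "?P ^ Suc m dvd of_nat N * y ^ N' * D y" using d1 by (simp add: mult.assoc)
      then have "?P ^ Suc m dvd of_nat N * y ^ N' * D y + ?P * D z" using d2 by (rule dvd_add)
      then show "?P ^ Suc m dvd D y" using eq by simp
    qed
  qed simp
  show ?thesis using ds_separated[OF ds] main by blast
qed


lemma dg_dg: "dg x ** dg y = dg (\<lambda>a. x a * y a)"
  by (simp add: vec_eq_iff dg_mult_left) (simp add: dg_def)

lemma el_conj_dg: assumes "\<And>a. runit (x a)" "i \<noteq> j"
  shows "dg x ** el i j c ** mat_inv (dg x) = el i j (x i * c * ring_inv (x j))"
  using assms(2)
  by (simp add: vec_eq_iff mat_inv_dg[OF assms(1)] dg_mult_right dg_mult_left)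
     (auto simp: el_def ring_inv_r[OF assms(1)])

lemma Ad_el_diag: assumes "i \<noteq> j" "\<And>a b. a \<noteq> b \<Longrightarrow> Y$a$b = 0"
  shows "(Ad (el i j c) Y)$u$v = Y$u$v + (if u = i \<and> v = j then c * (Y$j$j - Y$i$i) else 0)"
  using assms by (auto simp: Ad_el algebra_simps)

locale cocF =
  fixes p :: nat and \<phi> :: "'r::idom \<Rightarrow> 'r" and F :: "'r^'n::finite^'n \<Rightarrow> 'r^'n^'n"
  assumes ds: "delta_setting p \<phi>" and cc: "cocyc F"
    and Fdiag: "\<And>x a b. (\<And>l. runit (x l)) \<Longrightarrow> a \<noteq> b \<Longrightarrow> F (dg x) $ a $ b = 0"
begin

lemma two_nz: "(2::'r) \<noteq> 0" using ds_two[OF ds] unfolding runit_def by auto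
lemma three_nz: "(3::'r) \<noteq> 0" using ds_of_nat_nz[OF ds, of 3] by simp
lemma t2: "2 * ring_inv (2::'r) = 1" using ring_inv_r ds_two[OF ds] by blast

definition sc :: "'n \<Rightarrow> 'r \<Rightarrow> 'n \<Rightarrow> 'r" where "sc m s = (\<lambda>l. if l = m then s else 1)"
lemma sc_unit: "runit s \<Longrightarrow> runit (sc m s l)" unfolding sc_def by auto

lemma conj_formula: assumes "i \<noteq> j" "\<And>l. runit (x l)"
  shows "F (el i j (x i * a * ring_inv (x j))) $ u $ v =
    x u * F (el i j a) $ u $ v * ring_inv (x v)
    - (if u = i \<and> v = j then x i * a * ring_inv (x j) * (F (dg x) $ j $ j - F (dg x) $ i $ i) else 0)"
proof -
  let ?b = "x i * a * ring_inv (x j)"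
  have "F (dg x ** el i j a ** mat_inv (dg x)) = F (dg x) + Ad (dg x) (F (el i j a))
      - Ad (dg x ** el i j a ** mat_inv (dg x)) (F (dg x))"
    by (rule cocyc_conj[OF cc el_GL[OF assms(1)] dg_GL[OF assms(2)]])
  then have e: "F (el i j ?b) = F (dg x) + Ad (dg x) (F (el i j a)) - Ad (el i j ?b) (F (dg x))"
    using el_conj_dg[OF assms(2,1)] by simp
  show ?thesis
    unfolding e using assms
    by (simp add: Ad_dg Ad_el_diag Fdiag)
qed

lemma add_formula: assumes "i \<noteq> j"
  shows "F (el i j (a + b)) $ u $ v = F (el i j a) $ u $ v + F (el i j b) $ u $ v
     + (if u = i then a * F (el i j b) $ j $ v else 0)
     - (if v = j then (F (el i j b) $ u $ i + (if u = i then a * F (el i j b) $ j $ i else 0)) * a else 0)"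
proof -
  have "F (el i j a ** el i j b) = F (el i j a) + Ad (el i j a) (F (el i j b))"
    using cc el_GL[OF assms] unfolding cocyc_def by blast
  then have "F (el i j (a + b)) = F (el i j a) + Ad (el i j a) (F (el i j b))"
    by (simp only: el_el[OF assms])
  then show ?thesis by (simp add: Ad_el[OF assms])
qed

end


lemma ring_inv_one[simp]: "ring_inv (1::'r::idom) = 1" by (rule ring_inv_eq) simp

context cocF begin

lemma supp: assumes ij: "i \<noteq> j" and uv: "\<not> (u = i \<and> v = j)"
  shows "F (el i j a) $ u $ v = 0"
proof -
  define t where "t = ring_inv (2::'r)"
  have t: "2 * t = 1" using t2 t_def by simp
  have z1: "y = 0" if "2 * y = y" for y :: 'r
  proof -
    have "y + y = 2 * y" by (simp only: mult_2)
    also have "\<dots> = y" by (rule that)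
    finally have "y + y = y + 0" by simp
    then show ?thesis by (simp only: add_left_cancel)
  qed
  have z2: "y = 0" if "y = t * y" for y :: 'r
  proof -
    have "2 * y = 2 * (t * y)" using that by (rule arg_cong)
    also have "\<dots> = (2 * t) * y" by (rule mult.assoc[symmetric])
    also have "\<dots> = y" using t by simp
    finally show ?thesis by (rule z1)
  qed
  have z3: "y = 0" if "2 * y = t * y" for y :: 'r
  proof -
    have "2 * (2 * y) = 2 * (t * y)" using that by (rule arg_cong)
    also have "\<dots> = (2 * t) * y" by (rule mult.assoc[symmetric])
    also have "\<dots> = y" using t by simp
    finally have e: "4 * y = y" by simp
    have "3 * y = 4 * y - y" by (simp add: algebra_simps)
    also have "\<dots> = 0" by (simp only: e diff_self)
    finally show ?thesis using three_nz by simp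
  qed
  have n21: "(2::'r) \<noteq> 1" "(1::'r) \<noteq> 2" using z1[of 1] by auto
  have nt1: "t \<noteq> 1" "1 \<noteq> t" using t n21 by auto
  have nt2: "t \<noteq> 2" "2 \<noteq> t" using z3[of 1] t by auto
  have tt: "t * 2 = 1" using t by (simp add: mult.commute)
  note facts = n21 nt1 nt2 t tt two_nz
  have A2: "F (el i j (2*a)) $ u $ v = 2 * F (el i j a) $ u $ v + (if u = i then a * F (el i j a) $ j $ v else 0)
     - (if v = j then (F (el i j a) $ u $ i + (if u = i then a * F (el i j a) $ j $ i else 0)) * a else 0)" for a u v
  proof -
    have e: "2 * a = a + a" by (rule mult_2)
    have e2: "2 * F (el i j a) $ u $ v = F (el i j a) $ u $ v + F (el i j a) $ u $ v" by (rule mult_2)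
    show ?thesis unfolding e e2 by (rule add_formula[OF ij])
  qed
  have scu: "sc m 2 u = (if u = m then 2 else 1)" for m u unfolding sc_def by simp
  have sci: "ring_inv (if u = m then 2 else (1::'r)) = (if u = m then t else 1)" for m u :: 'n unfolding t_def by simp
  have u2: "\<And>l. runit (sc m 2 l)" for m using sc_unit ds_two[OF ds] by blast
  have Ci: "F (el i j (2*a)) $ u $ v = (if u = i then 2 else 1) * F (el i j a) $ u $ v * (if v = i then t else 1)"
    if "\<not> (u = i \<and> v = j)" for a u v
  proof -
    have arg: "sc i 2 i * a * ring_inv (sc i 2 j) = 2 * a" using ij by (simp add: sc_def)
    have "F (el i j (sc i 2 i * a * ring_inv (sc i 2 j))) $ u $ v = sc i 2 u * F (el i j a) $ u $ v * ring_inv (sc i 2 v)"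
      using conj_formula[of i j "sc i 2" a u v, OF ij u2] by (simp only: if_not_P[OF that] diff_zero)
    then show ?thesis unfolding arg by (simp only: scu sci)
  qed
  have Cm: "F (el i j a) $ u $ v = (if u = m then 2 else 1) * F (el i j a) $ u $ v * (if v = m then t else 1)"
    if "\<not> (u = i \<and> v = j)" "m \<noteq> i" "m \<noteq> j" for a u v m
  proof -
    have arg: "sc m 2 i * a * ring_inv (sc m 2 j) = a" using that by (simp add: sc_def)
    have "F (el i j (sc m 2 i * a * ring_inv (sc m 2 j))) $ u $ v = sc m 2 u * F (el i j a) $ u $ v * ring_inv (sc m 2 v)"
      using conj_formula[of i j "sc m 2" a u v, OF ij u2] by (simp only: if_not_P[OF that(1)] diff_zero)
    then show ?thesis unfolding arg by (simp only: scu sci)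
  qed
  have S1: "F (el i j a) $ u $ v = 0" if "u \<noteq> i" "v \<noteq> j" for a u v
  proof -
    have a2: "F (el i j (2*a)) $ u $ v = 2 * F (el i j a) $ u $ v" using A2[of a u v] that by simp
    show ?thesis
    proof (cases "u = v")
      case True
      show ?thesis using Ci[of u v a] a2 that True by (simp add: facts)
    next
      case uv: False
      show ?thesis
      proof (cases "v = i")
        case False
        show ?thesis using Ci[of u v a] a2 that False by (simp add: facts)
      next
        case vi: True
        show ?thesis
        proof (cases "u = j")
          case False
          show ?thesis using Cm[of u v u a] that vi uv False by (simp add: facts mult.commute)
        next
          case True
          show ?thesis using Ci[of u v a] a2 that vi ij True by (simp add: facts mult.commute)
        qed
      qed
    qed
  qed
  have S2: "F (el i j a) $ i $ v = 0" if "v \<noteq> j" for a v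
  proof -
    have a2: "F (el i j (2*a)) $ i $ v = 2 * F (el i j a) $ i $ v" using A2[of a i v] that S1[of j v a] ij by simp
    show ?thesis
    proof (cases "v = i")
      case True
      show ?thesis using Ci[of i v a] a2 that t True by (simp add: facts mult.commute)
    next
      case False
      show ?thesis using Cm[of i v v a] that ij False by (simp add: facts mult.commute)
    qed
  qed
  have S3: "F (el i j a) $ u $ j = 0" if "u \<noteq> i" for a u
  proof -
    have a2: "F (el i j (2*a)) $ u $ j = 2 * F (el i j a) $ u $ j" using A2[of a u j] that S1[of u i a] ij by simp
    show ?thesis
    proof (cases "u = j")
      case True
      show ?thesis using Ci[of u j a] a2 that ij True by (simp add: facts)
    next
      case False
      show ?thesis using Cm[of u j u a] that ij False by (simp add: facts mult.commute)
    qed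
  qed
  show ?thesis
  proof (cases "u = i")
    case True then show ?thesis using S2 uv by blast
  next
    case False then show ?thesis using S1 S3 by (cases "v = j") blast+
  qed
qed

end


context cocF begin

lemma psi_add: assumes "i \<noteq> j"
  shows "F (el i j (a + b)) $ i $ j = F (el i j a) $ i $ j + F (el i j b) $ i $ j"
  using add_formula[OF assms, of a b i j] supp[OF assms, of j j b] supp[OF assms, of i i b] supp[OF assms, of j i b] assms
  by simp

lemma psi_scale: assumes "i \<noteq> j" "runit s"
  shows "F (el i j (s * a)) $ i $ j = s * F (el i j a) $ i $ j
     - s * a * (F (dg (sc i s)) $ j $ j - F (dg (sc i s)) $ i $ i)"
proof -
  have u: "\<And>l. runit (sc i s l)" using sc_unit assms(2) by blast
  have arg: "sc i s i * a * ring_inv (sc i s j) = s * a" using assms(1) by (simp add: sc_def)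
  show ?thesis using conj_formula[of i j "sc i s" a i j, OF assms(1) u] unfolding arg
    using assms(1) by (simp add: sc_def)
qed

lemma psi_lin: assumes ij: "i \<noteq> j"
  shows "F (el i j a) $ i $ j = a * F (el i j 1) $ i $ j"
proof -
  define D where "D = (\<lambda>a. F (el i j a) $ i $ j - a * F (el i j 1) $ i $ j)"
  have "D a = 0"
  proof (rule derivation_zero[where D=D and x=a, OF ds])
    show "D (a + b) = D a + D b" for a b unfolding D_def using psi_add[OF ij] by (simp add: algebra_simps)
    show "D (s * a) = s * D a + a * D s" if "runit s" for s a
    proof -
      let ?d = "F (dg (sc i s)) $ j $ j - F (dg (sc i s)) $ i $ i"
      have e1: "F (el i j (s * a)) $ i $ j = s * F (el i j a) $ i $ j - s * a * ?d" by (rule psi_scale[OF ij that])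
      have e2: "F (el i j s) $ i $ j = s * F (el i j 1) $ i $ j - s * ?d" using psi_scale[OF ij that, of 1] by simp
      show ?thesis unfolding D_def e1 e2 by (simp add: algebra_simps)
    qed
  qed
  then show ?thesis unfolding D_def by simp
qed

lemma el_form: assumes ij: "i \<noteq> j"
  shows "F (el i j a) = (\<chi> u v. if u = i \<and> v = j then a * F (el i j 1) $ i $ j else 0)"
proof -
  have "F (el i j a) $ u $ v = (if u = i \<and> v = j then a * F (el i j 1) $ i $ j else 0)" for u v
  proof (cases "u = i \<and> v = j")
    case True then show ?thesis using psi_lin[OF ij, of a] by simp
  next
    case False then show ?thesis by (simp only: if_not_P[OF False] supp[OF ij False] if_False)
  qed
  then show ?thesis by (simp add: vec_eq_iff)
qed

lemma diag_eq: assumes ij: "i \<noteq> j" and x: "\<And>l. runit (x l)"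
  shows "F (dg x) $ i $ i = F (dg x) $ j $ j"
proof -
  let ?b = "x i * 1 * ring_inv (x j)"
  let ?c = "F (el i j 1) $ i $ j"
  have e: "F (el i j ?b) $ i $ j = x i * F (el i j 1) $ i $ j * ring_inv (x j) - ?b * (F (dg x) $ j $ j - F (dg x) $ i $ i)"
    using conj_formula[of i j x 1 i j, OF ij x] by simp
  have "F (el i j ?b) $ i $ j = ?b * ?c" by (rule psi_lin[OF ij])
  then have "?b * (F (dg x) $ j $ j - F (dg x) $ i $ i) = 0" using e by (simp add: algebra_simps)
  moreover have "?b \<noteq> 0"
  proof -
    have "runit ?b" using runit_mult[OF runit_mult[OF x runit_one] runit_inv[OF x]] .
    then obtain w where "?b * w = 1" unfolding runit_def by blast
    then show ?thesis by auto
  qed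
  ultimately show ?thesis by simp
qed

lemma dg_mat: assumes x: "\<And>l. runit (x l)"
  shows "F (dg x) = mat (F (dg x) $ k $ k)"
proof -
  have h: "F (dg x) $ a $ b = (if a = b then F (dg x) $ k $ k else 0)" for a b
  proof (cases "a = b")
    case True
    show ?thesis
    proof (cases "a = k")
      case False
      have "F (dg x) $ a $ a = F (dg x) $ k $ k" by (rule diag_eq[OF False x])
      then show ?thesis using True by simp
    qed (use True in simp)
  next
    case False then show ?thesis using Fdiag[OF x] by simp
  qed
  show ?thesis
  proof (rule iffD2[OF vec_eq_iff], intro allI)
    fix a show "F (dg x) $ a = mat (F (dg x) $ k $ k) $ a"
    proof (rule iffD2[OF vec_eq_iff], intro allI)
      fix b show "F (dg x) $ a $ b = mat (F (dg x) $ k $ k) $ a $ b"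
        unfolding h[of a b] by (simp add: mat_def)
    qed
  qed
qed

end


definition rr :: "'n::finite \<Rightarrow> 'r::idom^'n^'n" where
  "rr k = dg (\<lambda>l. if l = k then -1 else 1)"

lemma ring_inv_m1[simp]: "ring_inv (-1::'r::idom) = -1" by (rule ring_inv_eq) simp
lemma runit_m1: "runit (-1::'r::idom)" unfolding runit_def by (intro exI[of _ "-1"]) simp
lemma rr_units: "runit ((\<lambda>l. if l = k then -1 else 1::'r::idom) l)"
  unfolding runit_def by (cases "l = k") (auto intro: exI[of _ "-1"])
lemma rr_GL: "rr k \<in> GL_set" unfolding rr_def by (rule dg_GL) (rule rr_units)
lemma Ad_rr: "(Ad (rr k) Y)$a$b = (if a = k then -1 else 1) * Y$a$b * (if b = k then -1 else (1::'r::idom))"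
  unfolding rr_def by (subst Ad_dg) (rule rr_units, simp)
lemma rr_comm: "rr a ** rr k = rr k ** (rr a :: 'r::idom^'n::finite^'n)"
  unfolding rr_def dg_dg by (simp add: mult.commute)

locale cocA =
  fixes p :: nat and \<phi> :: "'r::idom \<Rightarrow> 'r" and f :: "'r^'n::finite^'n \<Rightarrow> 'r^'n^'n"
  assumes ds: "delta_setting p \<phi>" and cc: "cocyc f"
begin

lemma two_nz': "(2::'r) \<noteq> 0" using ds_two[OF ds] unfolding runit_def by auto

lemma comm_entry: "f (rr a) $ u $ v + (if u = a then -1 else 1) * f (rr k) $ u $ v * (if v = a then -1 else 1)
   = f (rr k) $ u $ v + (if u = k then -1 else 1) * f (rr a) $ u $ v * (if v = k then -1 else 1)"
proof -
  have "f (rr a) + Ad (rr a) (f (rr k)) = f (rr k) + Ad (rr k) (f (rr a))"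
    by (rule cocyc_comm[OF cc rr_GL rr_GL rr_comm])
  then have "(f (rr a) + Ad (rr a) (f (rr k))) $ u $ v = (f (rr k) + Ad (rr k) (f (rr a))) $ u $ v" by simp
  then show ?thesis by (simp only: vector_add_component Ad_rr)
qed

lemma f_rr_swap: assumes "a \<noteq> k" shows "f (rr a) $ a $ k = f (rr k) $ a $ k"
proof -
  have "f (rr a) $ a $ k - f (rr k) $ a $ k = f (rr k) $ a $ k - f (rr a) $ a $ k"
    using comm_entry[of a a k k] assms by simp
  then have "2 * (f (rr a) $ a $ k - f (rr k) $ a $ k) = 0" by (simp add: algebra_simps)
  then show ?thesis using two_nz' by simp
qed

lemma f_rr_off: assumes "a \<noteq> k" "b \<noteq> k" "a \<noteq> b" shows "f (rr k) $ a $ b = 0"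
proof -
  have "f (rr a) $ a $ b - f (rr k) $ a $ b = f (rr k) $ a $ b + f (rr a) $ a $ b"
    using comm_entry[of a a b k] assms by simp
  then have "2 * f (rr k) $ a $ b = 0" by (simp add: algebra_simps)
  then show ?thesis using two_nz' by simp
qed

definition v0 :: "'r^'n^'n" where
  "v0 = (\<chi> a b. if a = b then 0 else - ring_inv 2 * f (rr a) $ a $ b)"
definition f1 :: "'r^'n^'n \<Rightarrow> 'r^'n^'n" where "f1 g = f g - cob v0 g"

lemma f1_cc: "cocyc f1"
  unfolding f1_def[abs_def] by (rule cocyc_sub_cob[OF cc])

lemma f1_rr: assumes "a \<noteq> b" shows "f1 (rr k) $ a $ b = 0"
proof -
  have t: "2 * ring_inv (2::'r) = 1" using ring_inv_r ds_two[OF ds] by blast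
  have c: "cob v0 (rr k) $ a $ b = ((if a = k then -1 else 1) * (if b = k then -1 else 1) - 1) * v0 $ a $ b"
    unfolding cob_def by (simp add: Ad_rr algebra_simps)
  have e: "f1 (rr k) $ a $ b = f (rr k) $ a $ b - ((if a = k then -1 else 1) * (if b = k then -1 else 1) - 1)
      * (- ring_inv 2 * f (rr a) $ a $ b)"
    using assms unfolding f1_def vector_minus_component c by (simp add: v0_def)
  show ?thesis
  proof (cases "a = k")
    case True
    then have "f1 (rr k) $ a $ b = f (rr k) $ a $ b - (2 * ring_inv 2) * f (rr k) $ a $ b"
      using e assms by (simp add: algebra_simps)
    then show ?thesis using t by simp
  next
    case ak: False
    show ?thesis
    proof (cases "b = k")
      case True
      then have "f1 (rr k) $ a $ b = f (rr k) $ a $ b - (2 * ring_inv 2) * f (rr a) $ a $ b"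
        using e assms ak by (simp add: algebra_simps)
      then show ?thesis using t f_rr_swap[OF ak] True by simp
    next
      case False
      then show ?thesis using e f_rr_off[OF ak False assms] ak by simp
    qed
  qed
qed

lemma f1_dg: assumes x: "\<And>l. runit (x l)" and ab: "a \<noteq> b" shows "f1 (dg x) $ a $ b = 0"
proof -
  have gl: "dg x \<in> GL_set" by (rule dg_GL[OF x])
  have com: "dg x ** rr a = rr a ** dg x" unfolding rr_def dg_dg by (simp add: mult.commute)
  have "f1 (dg x) + Ad (dg x) (f1 (rr a)) = f1 (rr a) + Ad (rr a) (f1 (dg x))"
    by (rule cocyc_comm[OF f1_cc gl rr_GL com])
  then have "(f1 (dg x) + Ad (dg x) (f1 (rr a))) $ a $ b = (f1 (rr a) + Ad (rr a) (f1 (dg x))) $ a $ b" by simp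
  then have "f1 (dg x) $ a $ b + x a * f1 (rr a) $ a $ b * ring_inv (x b) = f1 (rr a) $ a $ b + - f1 (dg x) $ a $ b"
    using ab by (simp only: vector_add_component Ad_rr Ad_dg[OF x]) simp
  then have "2 * f1 (dg x) $ a $ b = 0" using f1_rr[OF ab] by (simp add: algebra_simps)
  then show ?thesis using two_nz' by simp
qed

lemma cocF_f1: "cocF p \<phi> f1"
  by (unfold_locales) (rule ds, rule f1_cc, rule f1_dg)

end


lemma Ad_el_vec: "i \<noteq> j \<Longrightarrow> Ad (el i j c) Y = (\<chi> a b. Y$a$b + (if a = i then c * Y$j$b else 0)
   - (if b = j then (Y$a$i + (if a = i then c * Y$j$i else 0)) * c else 0))"
  by (simp add: vec_eq_iff Ad_el)

context cocF begin

definition cc :: "'n \<Rightarrow> 'n \<Rightarrow> 'r" where "cc i j = F (el i j 1) $ i $ j"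

lemma el_form': "i \<noteq> j \<Longrightarrow> F (el i j a) = (\<chi> u v. if u = i \<and> v = j then a * cc i j else 0)"
  unfolding cc_def by (rule el_form)

lemma R1: assumes "i \<noteq> j" "j \<noteq> k" "i \<noteq> k"
  shows "cc j k = cc i k - cc i j"
proof -
  have mi: "el i j 1 ** el j k 1 = el j k 1 ** (el i j 1 ** el i k (1::'r))"
    using assms by (simp add: vec_eq_iff el_mult_left) (auto simp: el_def)
  have g0: "el i j (1::'r) \<in> GL_set" "el j k (1::'r) \<in> GL_set" "el i k (1::'r) \<in> GL_set"
    using assms el_GL by auto
  have g: "el i j (1::'r) \<in> GL_set" "el j k (1::'r) \<in> GL_set" "el i k (1::'r) \<in> GL_set"
    "el i j 1 ** el i k (1::'r) \<in> GL_set"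
    using g0 GL_mult[OF g0(1) g0(3)] by auto
  have "F (el i j 1 ** el j k 1) = F (el i j 1) + Ad (el i j 1) (F (el j k 1))"
    using cc g unfolding cocyc_def by blast
  moreover have "F (el j k 1 ** (el i j 1 ** el i k 1)) = F (el j k 1) + Ad (el j k 1) (F (el i j 1) + Ad (el i j 1) (F (el i k 1)))"
  proof -
    have "F (el i j 1 ** el i k 1) = F (el i j 1) + Ad (el i j 1) (F (el i k 1))"
      using cc g unfolding cocyc_def by blast
    moreover have "F (el j k 1 ** (el i j 1 ** el i k 1)) = F (el j k 1) + Ad (el j k 1) (F (el i j 1 ** el i k 1))"
      using cc g unfolding cocyc_def by blast
    ultimately show ?thesis by simp
  qed
  ultimately have "(F (el i j 1) + Ad (el i j 1) (F (el j k 1))) $ i $ k =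
      (F (el j k 1) + Ad (el j k 1) (F (el i j 1) + Ad (el i j 1) (F (el i k 1)))) $ i $ k"
    using mi by simp
  then show ?thesis using assms
    by (simp add: Ad_el_vec el_form' algebra_simps)
qed

lemma R2: assumes ij: "i \<noteq> j" shows "cc j i = - cc i j"
proof -
  let ?e1 = "el i j (1::'r)" and ?e2 = "el j i (-1::'r)"
  let ?w = "?e1 ** ?e2 ** ?e1"
  define d where "d = (\<lambda>l. if l = i \<or> l = j then -1 else (1::'r))"
  have du: "\<And>l. runit (d l)" unfolding d_def runit_def by (auto intro: exI[of _ "-1"])
  have g1: "?e1 \<in> GL_set" "?e2 \<in> GL_set" using el_GL[OF ij] el_GL[of j i] ij by auto
  have g12: "?e1 ** ?e2 \<in> GL_set" using GL_mult[OF g1] .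
  have gw: "?w \<in> GL_set" using GL_mult[OF g12 g1(1)] .
  have ww: "?w ** ?w = dg d"
  proof -
    have "?w ** ?w = ?e1 ** (?e2 ** (?e1 ** (?e1 ** (?e2 ** ?e1))))" by (simp add: matrix_mul_assoc)
    also have "\<dots> = dg d" using ij by (simp add: vec_eq_iff el_mult_left) (auto simp: el_def dg_def d_def)
    finally show ?thesis .
  qed
  have Fw: "F ?w = F ?e1 + Ad ?e1 (F ?e2) + Ad ?e1 (Ad ?e2 (F ?e1))"
  proof -
    have "F ?w = F (?e1 ** ?e2) + Ad (?e1 ** ?e2) (F ?e1)" using cc g12 g1 unfolding cocyc_def by blast
    also have "F (?e1 ** ?e2) = F ?e1 + Ad ?e1 (F ?e2)" using cc g1 unfolding cocyc_def by blast
    also have "Ad (?e1 ** ?e2) (F ?e1) = Ad ?e1 (Ad ?e2 (F ?e1))" by (rule Ad_mult[OF g1])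
    finally show ?thesis .
  qed
  have Aw: "Ad ?w Y = Ad ?e1 (Ad ?e2 (Ad ?e1 Y))" for Y
    using Ad_mult[OF g12 g1(1)] Ad_mult[OF g1] by simp
  have "F (?w ** ?w) = F ?w + Ad ?w (F ?w)" using cc gw unfolding cocyc_def by blast
  then have "F (dg d) $ i $ j = (F ?w + Ad ?e1 (Ad ?e2 (Ad ?e1 (F ?w)))) $ i $ j" using ww Aw by simp
  moreover have "F (dg d) $ i $ j = 0" by (rule Fdiag[OF du ij])
  ultimately have "(F ?w + Ad ?e1 (Ad ?e2 (Ad ?e1 (F ?w)))) $ i $ j = 0" by simp
  then have "2 * (cc i j + cc j i) = 0" unfolding Fw using ij
    by (simp add: Ad_el_vec el_form' algebra_simps)
  then have "2 * (cc j i + cc i j) = 0" by (simp add: algebra_simps)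
  then have "cc j i + cc i j = 0" using two_nz by (simp only: mult_eq_0_iff) simp
  then show ?thesis by (simp add: eq_neg_iff_add_eq_0)
qed

end


lemma sw_conj_dg: "sw i k ** dg x ** sw i k = dg (\<lambda>l. x (tr i k l))"
  by (simp add: vec_eq_iff sw_mult_left sw_mult_right) (simp add: dg_def tr_eq_iff)

context cocF begin

definition wv :: "'n \<Rightarrow> 'n \<Rightarrow> 'r" where "wv i0 = (\<lambda>l. if l = i0 then 0 else cc i0 l)"
definition F2 :: "'n \<Rightarrow> 'r^'n^'n \<Rightarrow> 'r^'n^'n" where "F2 i0 g = F g - cob (dg (wv i0)) g"

lemma F2_cc: "cocyc (F2 i0)" unfolding F2_def[abs_def] by (rule cocyc_sub_cob[OF cc])

lemma cc_rel: assumes "i \<noteq> j" shows "cc i j = wv i0 j - wv i0 i"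
proof (cases "i = i0")
  case True then show ?thesis using assms by (simp add: wv_def)
next
  case ni: False
  show ?thesis
  proof (cases "j = i0")
    case True then show ?thesis using ni R2[of i0 i] by (simp add: wv_def)
  next
    case False then show ?thesis using R1[of i0 i j] ni assms by (simp add: wv_def)
  qed
qed

lemma F2_el: assumes ij: "i \<noteq> j" shows "F2 i0 (el i j a) = 0"
proof -
  have dgz: "\<And>a b. a \<noteq> b \<Longrightarrow> dg (wv i0) $ a $ b = 0" by (simp add: dg_def)
  have "F2 i0 (el i j a) $ u $ v = 0" for u v
  proof -
    have A: "Ad (el i j a) (dg (wv i0)) $ u $ v = dg (wv i0) $ u $ v
       + (if u = i \<and> v = j then a * (dg (wv i0) $ j $ j - dg (wv i0) $ i $ i) else 0)"
      by (rule Ad_el_diag[OF ij dgz])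
    have B: "F (el i j a) $ u $ v = (if u = i \<and> v = j then a * cc i j else 0)"
      using el_form'[OF ij] by simp
    have C: "F2 i0 (el i j a) $ u $ v = F (el i j a) $ u $ v - (Ad (el i j a) (dg (wv i0)) $ u $ v - dg (wv i0) $ u $ v)"
      by (simp add: F2_def cob_def)
    show ?thesis unfolding C A B cc_rel[OF ij, of i0] by (simp add: dg_def)
  qed
  then show ?thesis by (simp add: vec_eq_iff)
qed

lemma F2_dg: assumes x: "\<And>l. runit (x l)" shows "F2 i0 (dg x) = F (dg x)"
proof -
  have "cob (dg (wv i0)) (dg x) = 0"
    unfolding cob_def by (simp add: vec_eq_iff Ad_dg[OF x]) (simp add: dg_def ring_inv_r[OF x])
  then show ?thesis unfolding F2_def by simp
qed

definition om :: "'n \<Rightarrow> 'r \<Rightarrow> 'r" where "om i0 u = F (dg (sc i0 u)) $ i0 $ i0"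

lemma F_dg_mult_entry: assumes x: "\<And>l. runit (x l)" and y: "\<And>l. runit (y l)"
  shows "F (dg (\<lambda>l. x l * y l)) $ k $ k = F (dg x) $ k $ k + F (dg y) $ k $ k"
proof -
  have "F (dg x ** dg y) = F (dg x) + Ad (dg x) (F (dg y))"
  proof -
    have "dg x \<in> GL_set" by (rule dg_GL, rule x)
    moreover have "dg y \<in> GL_set" by (rule dg_GL, rule y)
    ultimately
    show ?thesis using cc unfolding cocyc_def by blast
  qed
  then have "F (dg (\<lambda>l. x l * y l)) $ k $ k = F (dg x) $ k $ k + x k * F (dg y) $ k $ k * ring_inv (x k)"
    by (simp add: dg_dg Ad_dg[OF x])
  then show ?thesis using ring_inv_r[OF x] by (simp add: algebra_simps)
qed

lemma om_hom: assumes "runit u" "runit v" shows "om i0 (u * v) = om i0 u + om i0 v"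
proof -
  have "(\<lambda>l. sc i0 u l * sc i0 v l) = sc i0 (u * v)" by (auto simp: sc_def)
  then show ?thesis unfolding om_def using F_dg_mult_entry[of "sc i0 u" "sc i0 v" i0] sc_unit assms by simp
qed

lemma om_one: "om i0 1 = 0"
proof -
  have "om i0 1 = om i0 1 + om i0 1" using om_hom[OF runit_one runit_one, of i0] by (simp only: mult_1_left)
  then show ?thesis by (simp only: add_cancel_right_right)
qed

lemma runit_prod: "finite S \<Longrightarrow> (\<And>l. l \<in> S \<Longrightarrow> runit (x l)) \<Longrightarrow> runit (\<Prod>l\<in>S. x l)"
proof (induction S rule: finite_induct)
  case (insert a A) then show ?case using runit_mult by auto
qed simp

lemma om_prod: "finite S \<Longrightarrow> (\<And>l. l \<in> S \<Longrightarrow> runit (x l)) \<Longrightarrow> om i0 (\<Prod>l\<in>S. x l) = (\<Sum>l\<in>S. om i0 (x l))"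
proof (induction S rule: finite_induct)
  case empty then show ?case by (simp add: om_one)
next
  case (insert k S)
  have u: "runit (\<Prod>l\<in>S. x l)" using runit_prod[OF insert.hyps(1), of x] insert.prems by blast
  show ?case using insert om_hom[of "x k" "\<Prod>l\<in>S. x l" i0] u by simp
qed

lemma om_any: assumes "runit s" shows "F (dg (sc k s)) $ i0 $ i0 = om i0 s"
proof -
  have u: "\<And>l. runit (sc i0 s l)" using sc_unit assms by blast
  have uk: "\<And>l. runit (sc k s l)" using sc_unit assms by blast
  have cj: "sw i0 k ** dg (sc i0 s) ** mat_inv (sw i0 k) = dg (sc k s)"
    unfolding mat_inv_sw sw_conj_dg by (rule arg_cong[of _ _ dg]) (auto simp: sc_def tr_def fun_eq_iff)
  have "F (sw i0 k ** dg (sc i0 s) ** mat_inv (sw i0 k)) = F (sw i0 k) + Ad (sw i0 k) (F (dg (sc i0 s)))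
     - Ad (sw i0 k ** dg (sc i0 s) ** mat_inv (sw i0 k)) (F (sw i0 k))"
    by (rule cocyc_conj[OF cc dg_GL[of "sc i0 s", OF u] sw_GL])
  then have "F (dg (sc k s)) $ k $ k = F (sw i0 k) $ k $ k + F (dg (sc i0 s)) $ i0 $ i0
      - sc k s k * F (sw i0 k) $ k $ k * ring_inv (sc k s k)"
    unfolding cj by (simp add: Ad_sw Ad_dg[OF uk]) (simp add: tr_def)
  moreover have "sc k s k * X * ring_inv (sc k s k) = X" for X
    using ring_inv_r[OF assms] by (simp add: sc_def algebra_simps)
  ultimately have "F (dg (sc k s)) $ k $ k = om i0 s" unfolding om_def by simp
  moreover have "F (dg (sc k s)) $ i0 $ i0 = F (dg (sc k s)) $ k $ k"
    using arg_cong[OF dg_mat[of "sc k s" k, OF uk], of "\<lambda>M. M $ i0 $ i0"] by (simp add: mat_def)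
  ultimately show ?thesis by simp
qed

lemma F_dg_sum: assumes x: "\<And>l. runit (x l)"
  shows "finite S \<Longrightarrow> F (dg (\<lambda>l. if l \<in> S then x l else 1)) $ i0 $ i0 = (\<Sum>l\<in>S. om i0 (x l))"
proof (induction S rule: finite_induct)
  case empty
  have "dg (\<lambda>l. 1) = (mat 1 :: 'r^'n^'n)" by (simp add: vec_eq_iff dg_def mat_def)
  then show ?case using cocyc_one[OF cc] by simp
next
  case (insert k S)
  have u1: "\<And>l. runit (sc k (x k) l)" using sc_unit x by blast
  have u2: "\<And>l. runit ((\<lambda>l. if l \<in> S then x l else 1) l)" using x by simp
  have e: "(\<lambda>l. if l \<in> insert k S then x l else 1) = (\<lambda>l. sc k (x k) l * (if l \<in> S then x l else 1))"
    using insert.hyps by (auto simp: sc_def fun_eq_iff)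
  show ?case unfolding e F_dg_mult_entry[OF u1 u2] insert.IH om_any[OF x]
    using insert.hyps by simp
qed

lemma F_dg_om: assumes x: "\<And>l. runit (x l)" shows "F (dg x) = mat (om i0 (det (dg x)))"
proof -
  have "F (dg x) $ i0 $ i0 = (\<Sum>l\<in>UNIV. om i0 (x l))" using F_dg_sum[of x UNIV i0, OF x] by simp
  also have "\<dots> = om i0 (det (dg x))" unfolding det_dg using om_prod[of UNIV x i0] x by simp
  finally show ?thesis using dg_mat[of x i0, OF x] by simp
qed

end


definition stdcol :: "'r::idom^'n::finite^'n \<Rightarrow> 'n \<Rightarrow> bool" where
  "stdcol g j \<longleftrightarrow> (\<forall>l. g$l$j = (if l = j then 1 else 0))"

lemma pivot_exists:
  assumes ds: "delta_setting p (\<phi>::'r::idom \<Rightarrow> 'r)" and g: "g \<in> (GL_set :: ('r^'n::finite^'n) set)"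
    and j: "\<not> stdcol g j"
  shows "\<exists>m. \<not> stdcol g m \<and> runit (g$m$j)"
proof (rule ccontr)
  let ?P = "of_nat p :: 'r"
  assume "\<not> (\<exists>m. \<not> stdcol g m \<and> runit (g$m$j))"
  then have nd: "\<And>m. \<not> stdcol g m \<Longrightarrow> ?P dvd g$m$j" using ds_unit_iff[OF ds] by blast
  have "?P dvd (\<Prod>l\<in>UNIV. g$l$q l)" if q: "q permutes (UNIV::'n set)" for q
  proof -
    define l0 where "l0 = inv q j"
    have ql0: "q l0 = j" unfolding l0_def using permutes_inverses(1)[OF q] by simp
    show ?thesis
    proof (cases "stdcol g l0")
      case False
      then have "?P dvd g$l0$q l0" using nd ql0 by simp
      moreover have "g$l0$q l0 dvd (\<Prod>l\<in>UNIV. g$l$q l)" by (rule dvd_prodI) simp_all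
      ultimately show ?thesis by (rule dvd_trans)
    next
      case True
      have l0j: "l0 \<noteq> j" using True j by auto
      define l1 where "l1 = inv q l0"
      have ql1: "q l1 = l0" unfolding l1_def using permutes_inverses(1)[OF q] by simp
      have "l1 \<noteq> l0" using ql1 ql0 l0j by auto
      then have "g$l1$q l1 = 0" using True ql1 unfolding stdcol_def by simp
      then have "\<exists>a\<in>UNIV. g$a$q a = 0" by blast
      then have "(\<Prod>l\<in>UNIV. g$l$q l) = 0" by (rule prod_zero[OF finite])
      then show ?thesis by (simp only: dvd_0_right)
    qed
  qed
  then have "?P dvd det g" unfolding det_def by (intro dvd_sum dvd_mult) auto
  moreover have "runit (det g)" using g unfolding GL_set_def by simp
  ultimately show False using ds_unit_iff[OF ds] by blast
qed

locale genctx =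
  fixes p :: nat and \<phi> :: "'r::idom \<Rightarrow> 'r" and Q :: "'r^'n::finite^'n \<Rightarrow> bool"
  assumes ds: "delta_setting p \<phi>"
    and step_el: "\<And>g i j c. g \<in> GL_set \<Longrightarrow> i \<noteq> j \<Longrightarrow> Q (el i j c ** g) \<Longrightarrow> Q g"
    and step_dg: "\<And>g x. g \<in> GL_set \<Longrightarrow> (\<And>l. runit (x l)) \<Longrightarrow> Q (dg x ** g) \<Longrightarrow> Q g"
begin

lemma clear_col:
  shows "finite L \<Longrightarrow> j \<notin> L \<Longrightarrow> g \<in> GL_set \<Longrightarrow> g$j$j = 1 \<Longrightarrow> \<exists>g'. g' \<in> GL_set \<and> (Q g' \<longrightarrow> Q g) \<and> g'$j$j = 1
     \<and> (\<forall>l\<in>L. g'$l$j = 0) \<and> (\<forall>k. stdcol g k \<and> k \<noteq> j \<longrightarrow> stdcol g' k)"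
proof (induction L arbitrary: g rule: finite_induct)
  case empty then show ?case by blast
next
  case (insert l L)
  then obtain g' where g': "g' \<in> GL_set" "Q g' \<longrightarrow> Q g" "g'$j$j = 1" "\<forall>l\<in>L. g'$l$j = 0"
    "\<forall>k. stdcol g k \<and> k \<noteq> j \<longrightarrow> stdcol g' k" by blast
  have lj: "l \<noteq> j" using insert by auto
  let ?g = "el l j (- g'$l$j) ** g'"
  have e: "?g$a$b = g'$a$b + (if a = l then - g'$l$j * g'$j$b else 0)" for a b by (rule el_mult_left)
  have "?g \<in> GL_set" using GL_mult[OF el_GL[OF lj] g'(1)] .
  moreover have "Q ?g \<longrightarrow> Q g" using step_el[OF g'(1) lj] g'(2) by blast
  moreover have "?g$j$j = 1" using e[of j j] lj g'(3) by simp
  moreover have "\<forall>a\<in>insert l L. ?g$a$j = 0" using e g'(3,4) insert.hyps by auto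
  moreover have "\<forall>k. stdcol g k \<and> k \<noteq> j \<longrightarrow> stdcol ?g k"
  proof (intro allI impI)
    fix k assume k: "stdcol g k \<and> k \<noteq> j"
    then have sk: "stdcol g' k" using g'(5) by blast
    then have "g'$j$k = 0" using k unfolding stdcol_def by auto
    then show "stdcol ?g k" using sk e unfolding stdcol_def by simp
  qed
  ultimately show ?case by blast
qed

lemma col_reduce:
  assumes g: "g \<in> GL_set" and j: "\<not> stdcol g j"
  shows "\<exists>g'. g' \<in> GL_set \<and> (Q g' \<longrightarrow> Q g) \<and> stdcol g' j \<and> (\<forall>k. stdcol g k \<longrightarrow> stdcol g' k)"
proof -
  let ?P = "of_nat p :: 'r"
  obtain m where m: "\<not> stdcol g m" "runit (g$m$j)" using pivot_exists[OF ds g j] by blast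
  have "\<exists>g1. g1 \<in> GL_set \<and> (Q g1 \<longrightarrow> Q g) \<and> runit (g1$j$j) \<and> (\<forall>k. stdcol g k \<longrightarrow> stdcol g1 k)"
  proof (cases "runit (g$j$j)")
    case True then show ?thesis using g by blast
  next
    case False
    then have mj: "m \<noteq> j" using m by auto
    let ?g = "el j m 1 ** g"
    have e: "?g$a$b = g$a$b + (if a = j then 1 * g$m$b else 0)" for a b by (rule el_mult_left)
    have "?g \<in> GL_set" using GL_mult[OF el_GL[OF mj[symmetric]] g] .
    moreover have "Q ?g \<longrightarrow> Q g" using step_el[OF g mj[symmetric], of 1] by blast
    moreover have "runit (?g$j$j)"
    proof -
      have "?P dvd g$j$j" "\<not> ?P dvd g$m$j" using False m(2) ds_unit_iff[OF ds] by blast+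
      then have "\<not> ?P dvd (g$j$j + g$m$j)" by (metis dvd_add_right_iff)
      then show ?thesis using e[of j j] ds_unit_iff[OF ds] by simp
    qed
    moreover have "\<forall>k. stdcol g k \<longrightarrow> stdcol ?g k"
    proof (intro allI impI)
      fix k assume k: "stdcol g k"
      then have "m \<noteq> k" using m(1) by auto
      then have "g$m$k = 0" using k unfolding stdcol_def by simp
      then show "stdcol ?g k" using k e unfolding stdcol_def by simp
    qed
    ultimately show ?thesis by blast
  qed
  then obtain g1 where g1: "g1 \<in> GL_set" "Q g1 \<longrightarrow> Q g" "runit (g1$j$j)" "\<forall>k. stdcol g k \<longrightarrow> stdcol g1 k" by blast
  define x where "x = (\<lambda>l. if l = j then ring_inv (g1$j$j) else (1::'r))"
  have xu: "\<And>l. runit (x l)" unfolding x_def using runit_inv[OF g1(3)] by simp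
  let ?g2 = "dg x ** g1"
  have e2: "?g2$a$b = x a * g1$a$b" for a b by (rule dg_mult_left)
  have g2: "?g2 \<in> GL_set" using GL_mult[OF dg_GL[of x, OF xu] g1(1)] .
  have q2: "Q ?g2 \<longrightarrow> Q g" using step_dg[of g1 x, OF g1(1) xu] g1(2) by blast
  have jj2: "?g2$j$j = 1" using e2[of j j] ring_inv_l[OF g1(3)] unfolding x_def by simp
  have sj: "stdcol g k \<Longrightarrow> k \<noteq> j" for k using j by auto
  have s2: "\<forall>k. stdcol g k \<longrightarrow> stdcol ?g2 k"
  proof (intro allI impI)
    fix k assume k: "stdcol g k"
    then have s1: "stdcol g1 k" using g1(4) by blast
    have "k \<noteq> j" using sj k .
    then show "stdcol ?g2 k" using s1 e2 unfolding stdcol_def x_def by auto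
  qed
  obtain g3 where g3: "g3 \<in> GL_set" "Q g3 \<longrightarrow> Q ?g2" "g3$j$j = 1" "\<forall>l\<in>UNIV - {j}. g3$l$j = 0"
    "\<forall>k. stdcol ?g2 k \<and> k \<noteq> j \<longrightarrow> stdcol g3 k"
    using clear_col[of "UNIV - {j}" j ?g2] g2 jj2 by auto
  have "stdcol g3 j" using g3(3,4) unfolding stdcol_def by auto
  moreover have "\<forall>k. stdcol g k \<longrightarrow> stdcol g3 k" using s2 g3(5) sj by blast
  ultimately show ?thesis using g3(1,2) q2 by blast
qed

lemma gen_induct:
  assumes base: "Q (mat 1)"
  shows "g \<in> GL_set \<Longrightarrow> Q g"
proof (induction "card {k. \<not> stdcol g k}" arbitrary: g rule: less_induct)
  case less
  show ?case
  proof (cases "\<exists>j. \<not> stdcol g j")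
    case False
    then have "g = mat 1" unfolding stdcol_def by (simp add: vec_eq_iff mat_def)
    then show ?thesis using base by simp
  next
    case True
    then obtain j where j: "\<not> stdcol g j" by blast
    obtain g' where g': "g' \<in> GL_set" "Q g' \<longrightarrow> Q g" "stdcol g' j" "\<forall>k. stdcol g k \<longrightarrow> stdcol g' k"
      using col_reduce[OF less.prems j] by blast
    have "{k. \<not> stdcol g' k} \<subset> {k. \<not> stdcol g k}" using g'(3,4) j by auto
    then have "card {k. \<not> stdcol g' k} < card {k. \<not> stdcol g k}" by (rule psubset_card_mono[OF finite])
    then show ?thesis using less.hyps g' by blast
  qed
qed

end


context cocA begin

definition om0 :: "'n \<Rightarrow> 'r \<Rightarrow> 'r" where "om0 i0 u = f (dg (\<lambda>l. if l = i0 then u else 1)) $ i0 $ i0"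

interpretation C: cocF p \<phi> f1 by (rule cocF_f1)

lemma om_eq: assumes "runit u" shows "C.om i0 u = om0 i0 u"
proof -
  have x: "\<And>l. runit (C.sc i0 u l)" using C.sc_unit assms by blast
  have "C.sc i0 u = (\<lambda>l. if l = i0 then u else 1)" by (simp add: C.sc_def fun_eq_iff)
  moreover have "cob v0 (dg (C.sc i0 u)) $ i0 $ i0 = 0"
    unfolding cob_def using ring_inv_r[OF x[of i0]] by (simp add: Ad_dg[OF x] algebra_simps)
  ultimately show ?thesis unfolding C.om_def om0_def f1_def by simp
qed

lemma om0_hom: "runit u \<Longrightarrow> runit v \<Longrightarrow> om0 i0 (u * v) = om0 i0 u + om0 i0 v"
  using C.om_hom[of u v i0] om_eq runit_mult by metis

lemma main_struct: "\<exists>V. \<forall>g\<in>GL_set. f g = mat (om0 i0 (det g)) + g ** V ** mat_inv g - V"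
proof -
  let ?Q = "\<lambda>g. g \<in> GL_set \<longrightarrow> C.F2 i0 g = mat (C.om i0 (det g))"
  have cc2: "cocyc (C.F2 i0)" by (rule C.F2_cc)
  interpret G: genctx p \<phi> ?Q
  proof (unfold_locales)
    show "delta_setting p \<phi>" by (rule ds)
  next
    fix g :: "'r^'n^'n" and i j c assume g: "g \<in> GL_set" and ij: "i \<noteq> j" and q: "?Q (el i j c ** g)"
    have ge: "el i j c \<in> GL_set" using el_GL[OF ij] .
    have "C.F2 i0 (el i j c ** g) = C.F2 i0 (el i j c) + Ad (el i j c) (C.F2 i0 g)"
      using cc2 ge g unfolding cocyc_def by blast
    then have "Ad (el i j c) (C.F2 i0 g) = mat (C.om i0 (det g))"
      using q GL_mult[OF ge g] C.F2_el[OF ij] by (simp add: det_mul det_el[OF ij])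
    then have "Ad (mat_inv (el i j c)) (Ad (el i j c) (C.F2 i0 g)) = mat (C.om i0 (det g))"
      using Ad_mat[OF GL_inv_mem[OF ge]] by simp
    then show "?Q g" using Ad_inv[OF ge] by simp
  next
    fix g :: "'r^'n^'n" and x assume g: "g \<in> GL_set" and x: "\<And>l. runit (x l)" and q: "?Q (dg x ** g)"
    have ge: "dg x \<in> GL_set" by (rule dg_GL, rule x)
    have ux: "runit (det (dg x))" using ge unfolding GL_set_def by simp
    have ug: "runit (det g)" using g unfolding GL_set_def by simp
    have "C.F2 i0 (dg x ** g) = C.F2 i0 (dg x) + Ad (dg x) (C.F2 i0 g)"
      using cc2 ge g unfolding cocyc_def by blast
    moreover have "C.F2 i0 (dg x) = mat (C.om i0 (det (dg x)))"
      using C.F2_dg[of x i0, OF x] C.F_dg_om[of x i0, OF x] by simp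
    moreover have "C.F2 i0 (dg x ** g) = mat (C.om i0 (det (dg x)) + C.om i0 (det g))"
      using q GL_mult[OF ge g] C.om_hom[OF ux ug] by (simp add: det_mul)
    moreover have "mat (a + b) = (mat a + mat b :: 'r^'n^'n)" for a b by (simp add: vec_eq_iff mat_def)
    ultimately have "mat (C.om i0 (det (dg x))) + Ad (dg x) (C.F2 i0 g) = mat (C.om i0 (det (dg x))) + mat (C.om i0 (det g))"
      by simp
    then have "Ad (dg x) (C.F2 i0 g) = mat (C.om i0 (det g))" by (simp only: add_left_cancel)
    then have "Ad (mat_inv (dg x)) (Ad (dg x) (C.F2 i0 g)) = mat (C.om i0 (det g))"
      using Ad_mat[OF GL_inv_mem[OF ge]] by simp
    then show "?Q g" using Ad_inv[OF ge] by simp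
  qed
  have base: "?Q (mat 1)" using cocyc_one[OF cc2] C.om_one by simp
  have all: "\<And>g. g \<in> GL_set \<Longrightarrow> C.F2 i0 g = mat (C.om i0 (det g))"
    using G.gen_induct[OF base] by blast
  define V where "V = v0 + dg (C.wv i0)"
  have "f g = mat (om0 i0 (det g)) + g ** V ** mat_inv g - V" if g: "g \<in> GL_set" for g
  proof -
    have ug: "runit (det g)" using g unfolding GL_set_def by simp
    have "f g = C.F2 i0 g + cob (dg (C.wv i0)) g + cob v0 g"
      unfolding C.F2_def f1_def by simp
    also have "\<dots> = mat (om0 i0 (det g)) + cob V g"
      unfolding all[OF g] om_eq[OF ug] V_def cob_add by (simp add: add.commute)
    finally show ?thesis by (simp add: cob_def Ad_def algebra_simps)
  qed
  then show ?thesis by blast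
qed

end


lemma ds_phi: assumes "delta_setting p (\<phi>::'r::idom \<Rightarrow> 'r)"
  shows "\<phi> 1 = 1" "\<And>x y. \<phi> (x + y) = \<phi> x + \<phi> y" "\<phi> 0 = 0"
proof -
  show "\<phi> 1 = 1" "\<And>x y. \<phi> (x + y) = \<phi> x + \<phi> y" using assms unfolding delta_setting_def by blast+
  then have "\<phi> (0 + 0) = \<phi> 0 + \<phi> 0" by blast
  then show "\<phi> 0 = 0" by (simp only: add_0 add_cancel_right_right)
qed

lemma delta_triv: assumes ds: "delta_setting p (\<phi>::'r::idom \<Rightarrow> 'r)" and "\<phi> x - x ^ p = 0"
  shows "delta p \<phi> x = 0"
proof -
  have nz: "(of_nat p :: 'r) \<noteq> 0" using ds_basic(3)[OF ds] .
  show ?thesis unfolding delta_def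
  proof (rule the_equality)
    show "of_nat p * 0 = \<phi> x - x ^ p" using assms(2) by simp
    fix y assume "of_nat p * y = \<phi> x - x ^ p"
    then have "of_nat p * y = 0" using assms(2) by simp
    then show "y = 0" using nz by simp
  qed
qed

lemma delta_0: assumes ds: "delta_setting p (\<phi>::'r::idom \<Rightarrow> 'r)" shows "delta p \<phi> 0 = 0"
proof (rule delta_triv[OF ds])
  have "p > 0" using ds_basic(1)[OF ds] by (simp add: prime_gt_0_nat)
  then show "\<phi> 0 - 0 ^ p = 0" using ds_phi(3)[OF ds] by simp
qed
lemma delta_1: assumes ds: "delta_setting p (\<phi>::'r::idom \<Rightarrow> 'r)" shows "delta p \<phi> 1 = 0"
  by (rule delta_triv[OF ds]) (simp add: ds_phi(1)[OF ds])
lemma deltapow_0: "delta_setting p (\<phi>::'r::idom \<Rightarrow> 'r) \<Longrightarrow> (delta p \<phi> ^^ l) 0 = 0"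
  by (induction l) (simp_all add: delta_0)
lemma deltapow_1: "delta_setting p (\<phi>::'r::idom \<Rightarrow> 'r) \<Longrightarrow> (delta p \<phi> ^^ l) 1 = (if l = 0 then 1 else 0)"
proof (cases l)
  case (Suc n)
  assume ds: "delta_setting p \<phi>"
  have "(delta p \<phi> ^^ Suc n) 1 = (delta p \<phi> ^^ n) (delta p \<phi> 1)" by (simp only: funpow_Suc_right o_apply)
  then show ?thesis using Suc deltapow_0[OF ds] delta_1[OF ds] by simp
qed simp


locale dmap =
  fixes p :: nat and \<phi> :: "'r::idom \<Rightarrow> 'r" and c :: "((nat \<times> 'n::finite \<times> 'n) option \<Rightarrow> nat) \<Rightarrow> 'r"
    and m :: nat and i0 :: "'n" and w :: "'r \<Rightarrow> 'r"
  assumes ds: "delta_setting p \<phi>"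
    and rpsc: "rps p {v. case v of None \<Rightarrow> True | Some (l, _, _) \<Rightarrow> l \<le> m} c"
    and valc: "\<And>u. runit u \<Longrightarrow> rps_val p c (GL_point p \<phi> (dg (\<lambda>l. if l = i0 then u else 1))) (w u)"
begin

abbreviation P :: 'r where "P \<equiv> of_nat p"

definition h :: "nat option \<Rightarrow> (nat \<times> 'n \<times> 'n) option" where "h = map_option (\<lambda>l. (l, i0, i0))"
definition live :: "((nat \<times> 'n \<times> 'n) option \<Rightarrow> nat) \<Rightarrow> bool" where
  "live \<alpha> \<longleftrightarrow> (\<forall>v. \<alpha> v \<noteq> 0 \<longrightarrow> v \<in> range h \<or> (\<exists>k. k \<noteq> i0 \<and> v = Some (0, k, k)))"
definition proj :: "((nat \<times> 'n \<times> 'n) option \<Rightarrow> nat) \<Rightarrow> nat option \<Rightarrow> nat" where "proj \<alpha> = \<alpha> \<circ> h"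
definition A :: "nat \<Rightarrow> ((nat \<times> 'n \<times> 'n) option \<Rightarrow> nat) set" where "A k = {\<alpha>. \<not> P ^ k dvd c \<alpha>}"
definition Fb :: "nat \<Rightarrow> (nat option \<Rightarrow> nat) \<Rightarrow> ((nat \<times> 'n \<times> 'n) option \<Rightarrow> nat) set" where
  "Fb k \<beta> = {\<alpha> \<in> A k. live \<alpha> \<and> proj \<alpha> = \<beta>}"
definition S :: "nat \<Rightarrow> (nat option \<Rightarrow> nat) \<Rightarrow> 'r" where "S k \<beta> = (\<Sum>\<alpha>\<in>Fb k \<beta>. c \<alpha>)"
definition G :: "(nat option \<Rightarrow> nat) \<Rightarrow> 'r" where "G \<beta> = (SOME L. \<forall>k. P ^ k dvd (S k \<beta> - L))"

lemma inj_h: "inj h"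
proof (rule injI)
  fix x y assume "h x = h y" then show "x = y" unfolding h_def by (cases x; cases y) auto
qed

lemma finA: "finite (A k)" using rpsc unfolding rps_def A_def by blast
lemma finFb: "finite (Fb k \<beta>)" using finA unfolding Fb_def by auto

lemma A_mono: "k \<le> k' \<Longrightarrow> A k \<subseteq> A k'"
  unfolding A_def using le_imp_power_dvd dvd_trans by blast

lemma Fb_mono: "k \<le> k' \<Longrightarrow> Fb k \<beta> \<subseteq> Fb k' \<beta>" unfolding Fb_def using A_mono by blast

lemma S_cauchy: assumes "k \<le> k'" shows "P ^ k dvd (S k' \<beta> - S k \<beta>)"
proof -
  have "S k' \<beta> - S k \<beta> = (\<Sum>\<alpha>\<in>Fb k' \<beta> - Fb k \<beta>. c \<alpha>)"
    unfolding S_def using sum.subset_diff[OF Fb_mono[OF assms] finFb] by (simp add: algebra_simps)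
  also have "P ^ k dvd \<dots>"
  proof (rule dvd_sum)
    fix \<alpha> assume "\<alpha> \<in> Fb k' \<beta> - Fb k \<beta>"
    then have "\<alpha> \<notin> A k" unfolding Fb_def by auto
    then show "P ^ k dvd c \<alpha>" unfolding A_def by simp
  qed
  finally show ?thesis .
qed

lemma G_prop: "P ^ k dvd (S k \<beta> - G \<beta>)"
proof -
  have "\<exists>L. \<forall>k. \<exists>N. \<forall>m'\<ge>N. P ^ k dvd (S m' \<beta> - L)"
  proof -
    have cauchy: "\<forall>k. \<exists>N. \<forall>m'\<ge>N. P ^ k dvd (S m' \<beta> - S N \<beta>)" using S_cauchy by blast
    have compl: "\<forall>X::nat \<Rightarrow> 'r. (\<forall>k. \<exists>N. \<forall>m\<ge>N. P ^ k dvd (X m - X N)) \<longrightarrow> (\<exists>L. \<forall>k. \<exists>N. \<forall>m\<ge>N. P ^ k dvd (X m - L))"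
      using ds unfolding delta_setting_def by blast
    show ?thesis using compl[rule_format, of "\<lambda>m'. S m' \<beta>"] cauchy by blast
  qed
  then obtain L where L: "\<forall>k. \<exists>N. \<forall>m'\<ge>N. P ^ k dvd (S m' \<beta> - L)" by blast
  have "P ^ k dvd (S k \<beta> - L)" for k
  proof -
    obtain N where N: "\<forall>m'\<ge>N. P ^ k dvd (S m' \<beta> - L)" using L by blast
    let ?M = "max N k"
    have "P ^ k dvd (S ?M \<beta> - L)" using N by simp
    moreover have "P ^ k dvd (S ?M \<beta> - S k \<beta>)" by (rule S_cauchy) simp
    ultimately have "P ^ k dvd ((S ?M \<beta> - L) - (S ?M \<beta> - S k \<beta>))" by (rule dvd_diff)
    then show ?thesis by (simp add: algebra_simps)
  qed
  then have "\<forall>k. P ^ k dvd (S k \<beta> - L)" by blast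
  then have "\<forall>k. P ^ k dvd (S k \<beta> - G \<beta>)" unfolding G_def by (rule someI[where x=L])
  then show ?thesis by blast
qed

lemma G_out: "Fb k \<beta> = {} \<Longrightarrow> P ^ k dvd G \<beta>"
  using G_prop[of k \<beta>] unfolding S_def by simp

lemma Gnz_Fb: assumes "\<not> P ^ k dvd G \<beta>" shows "\<exists>\<alpha>. \<alpha> \<in> Fb k \<beta>"
  using G_out assms by blast

lemma rps_G: "rps p {v. case v of None \<Rightarrow> True | Some l \<Rightarrow> l \<le> m} G"
  unfolding rps_def
proof (intro conjI allI impI)
  fix \<beta> assume Gz: "G \<beta> \<noteq> 0"
  have "\<exists>k. \<not> P ^ k dvd G \<beta>" using ds_separated[OF ds] Gz by blast
  then obtain k \<alpha> where \<alpha>: "\<alpha> \<in> Fb k \<beta>" using Gnz_Fb by blast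
  then have "c \<alpha> \<noteq> 0" unfolding Fb_def A_def by auto
  then have fa: "finite {v. \<alpha> v \<noteq> 0}" and sa: "{v. \<alpha> v \<noteq> 0} \<subseteq> {v. case v of None \<Rightarrow> True | Some (l, _, _) \<Rightarrow> l \<le> m}"
    using rpsc unfolding rps_def by blast+
  have pb: "\<beta> = \<alpha> \<circ> h" using \<alpha> unfolding Fb_def proj_def by auto
  have eq: "{v. \<beta> v \<noteq> 0} = h -` {v. \<alpha> v \<noteq> 0}" using pb by auto
  show "finite {v. \<beta> v \<noteq> 0}" unfolding eq by (rule finite_vimageI[OF fa inj_h])
  show "{v. \<beta> v \<noteq> 0} \<subseteq> {v. case v of None \<Rightarrow> True | Some l \<Rightarrow> l \<le> m}"
  proof
    fix v assume "v \<in> {v. \<beta> v \<noteq> 0}"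
    then have "h v \<in> {v. \<alpha> v \<noteq> 0}" using eq by auto
    then have "h v \<in> {v. case v of None \<Rightarrow> True | Some (l, _, _) \<Rightarrow> l \<le> m}" using sa by blast
    then show "v \<in> {v. case v of None \<Rightarrow> True | Some l \<Rightarrow> l \<le> m}" unfolding h_def by (cases v) auto
  qed
next
  fix k
  have "{\<beta>. \<not> P ^ k dvd G \<beta>} \<subseteq> proj ` A k"
  proof
    fix \<beta> assume "\<beta> \<in> {\<beta>. \<not> P ^ k dvd G \<beta>}"
    then obtain \<alpha> where "\<alpha> \<in> Fb k \<beta>" using Gnz_Fb by blast
    then show "\<beta> \<in> proj ` A k" unfolding Fb_def by auto
  qed
  then show "finite {\<beta>. \<not> (of_nat p :: 'r) ^ k dvd G \<beta>}" using finite_subset finA by blast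
qed

end


context dmap begin

definition gu :: "'r \<Rightarrow> 'r^'n^'n" where "gu u = dg (\<lambda>l. if l = i0 then u else 1)"

lemma det_gu: "det (gu u) = u"
  unfolding gu_def det_dg by (simp add: prod.delta)

lemma gu_entry: "gu u $ a $ b = (if a = b then (if a = i0 then u else 1) else 0)"
  unfolding gu_def dg_def by simp

lemma pt_h: "GL_point p \<phi> (gu u) (h v) = Gm_point p \<phi> u v"
  by (cases v) (simp_all add: h_def GL_point_def Gm_point_def det_gu gu_entry)

lemma pt_one: "k \<noteq> i0 \<Longrightarrow> GL_point p \<phi> (gu u) (Some (0, k, k)) = 1"
  by (simp add: GL_point_def gu_entry)

lemma pt_zero: assumes "v \<notin> range h" "\<not> (\<exists>k. k \<noteq> i0 \<and> v = Some (0, k, k))"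
  shows "GL_point p \<phi> (gu u) v = 0"
proof (cases v)
  case None then show ?thesis using assms(1) by (simp add: h_def)
next
  case (Some t)
  obtain l a b where t: "t = (l, a, b)" by (cases t) auto
  have nh: "\<not> (a = i0 \<and> b = i0)"
  proof
    assume "a = i0 \<and> b = i0"
    then have "v = h (Some l)" using Some t by (simp add: h_def)
    then show False using assms(1) by blast
  qed
  show ?thesis
  proof (cases "a = b")
    case False
    then show ?thesis using Some t deltapow_0[OF ds] by (simp add: GL_point_def gu_entry)
  next
    case True
    then have ai: "a \<noteq> i0" using nh by auto
    then have "l \<noteq> 0" using assms(2) Some t True by auto
    then show ?thesis using Some t True ai deltapow_1[OF ds] by (simp add: GL_point_def gu_entry)
  qed
qed

lemma mon_live: assumes fin: "finite {v. \<alpha> v \<noteq> 0}" and lv: "live \<alpha>"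
  shows "mon_eval \<alpha> (GL_point p \<phi> (gu u)) = mon_eval (proj \<alpha>) (Gm_point p \<phi> u)"
proof -
  let ?pt = "GL_point p \<phi> (gu u)" and ?q = "Gm_point p \<phi> u"
  let ?Sa = "{v. \<alpha> v \<noteq> 0}"
  have "(\<Prod>v\<in>?Sa. ?pt v ^ \<alpha> v) = (\<Prod>v\<in>?Sa \<inter> range h. ?pt v ^ \<alpha> v)"
  proof (rule prod.mono_neutral_right[OF fin])
    show "?Sa \<inter> range h \<subseteq> ?Sa" by blast
    show "\<forall>v\<in>?Sa - ?Sa \<inter> range h. ?pt v ^ \<alpha> v = 1"
    proof
      fix v assume v: "v \<in> ?Sa - ?Sa \<inter> range h"
      then obtain k where "k \<noteq> i0" "v = Some (0, k, k)" using lv unfolding live_def by blast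
      then show "?pt v ^ \<alpha> v = 1" using pt_one by simp
    qed
  qed
  also have "?Sa \<inter> range h = h ` (h -` ?Sa)" by blast
  also have "(\<Prod>v\<in>h ` (h -` ?Sa). ?pt v ^ \<alpha> v) = (\<Prod>w\<in>h -` ?Sa. ?pt (h w) ^ \<alpha> (h w))"
    by (rule prod.reindex[unfolded o_def]) (rule inj_on_subset[OF inj_h], simp)
  also have "\<dots> = (\<Prod>w\<in>{w. proj \<alpha> w \<noteq> 0}. ?q w ^ proj \<alpha> w)"
    by (rule prod.cong) (auto simp: pt_h proj_def)
  finally show ?thesis unfolding mon_eval_def .
qed

lemma mon_dead: assumes fin: "finite {v. \<alpha> v \<noteq> 0}" and lv: "\<not> live \<alpha>"
  shows "mon_eval \<alpha> (GL_point p \<phi> (gu u)) = 0"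
proof -
  obtain v where v: "\<alpha> v \<noteq> 0" "v \<notin> range h" "\<not> (\<exists>k. k \<noteq> i0 \<and> v = Some (0, k, k))"
    using lv unfolding live_def by blast
  have "GL_point p \<phi> (gu u) v ^ \<alpha> v = 0" using pt_zero[OF v(2,3)] v(1) by simp
  then show ?thesis unfolding mon_eval_def using v(1) fin by (intro prod_zero) auto
qed

lemma val_G: assumes u: "runit u" shows "rps_val p G (Gm_point p \<phi> u) (w u)"
  unfolding rps_val_def
proof
  fix k
  let ?pt = "GL_point p \<phi> (gu u)" and ?q = "Gm_point p \<phi> u"
  let ?L = "{\<alpha> \<in> A k. live \<alpha>}"
  let ?T = "proj ` ?L"
  let ?B = "{\<beta>. \<not> P ^ k dvd G \<beta>}"
  have v0: "P ^ k dvd (w u - (\<Sum>\<alpha>\<in>A k. c \<alpha> * mon_eval \<alpha> ?pt))"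
    using valc[OF u] unfolding rps_val_def gu_def A_def by blast
  have finL: "finite ?L" using finA by auto
  have s1: "(\<Sum>\<alpha>\<in>A k. c \<alpha> * mon_eval \<alpha> ?pt) = (\<Sum>\<alpha>\<in>?L. c \<alpha> * mon_eval (proj \<alpha>) ?q)"
  proof -
    have "(\<Sum>\<alpha>\<in>A k. c \<alpha> * mon_eval \<alpha> ?pt) = (\<Sum>\<alpha>\<in>?L. c \<alpha> * mon_eval \<alpha> ?pt)"
    proof (rule sum.mono_neutral_right[OF finA])
      show "?L \<subseteq> A k" by blast
      show "\<forall>\<alpha>\<in>A k - ?L. c \<alpha> * mon_eval \<alpha> ?pt = 0"
      proof
        fix \<alpha> assume a: "\<alpha> \<in> A k - ?L"
        then have "c \<alpha> \<noteq> 0" unfolding A_def by auto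
        then have "finite {v. \<alpha> v \<noteq> 0}" using rpsc unfolding rps_def by blast
        then show "c \<alpha> * mon_eval \<alpha> ?pt = 0" using mon_dead a by simp
      qed
    qed
    also have "\<dots> = (\<Sum>\<alpha>\<in>?L. c \<alpha> * mon_eval (proj \<alpha>) ?q)"
    proof (rule sum.cong[OF refl])
      fix \<alpha> assume a: "\<alpha> \<in> ?L"
      then have "c \<alpha> \<noteq> 0" unfolding A_def by auto
      then have "finite {v. \<alpha> v \<noteq> 0}" using rpsc unfolding rps_def by blast
      then show "c \<alpha> * mon_eval \<alpha> ?pt = c \<alpha> * mon_eval (proj \<alpha>) ?q" using mon_live a by simp
    qed
    finally show ?thesis .
  qed
  have s2: "(\<Sum>\<alpha>\<in>?L. c \<alpha> * mon_eval (proj \<alpha>) ?q) = (\<Sum>\<beta>\<in>?T. S k \<beta> * mon_eval \<beta> ?q)"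
  proof -
    have "(\<Sum>\<alpha>\<in>?L. c \<alpha> * mon_eval (proj \<alpha>) ?q) = (\<Sum>\<beta>\<in>?T. \<Sum>\<alpha>\<in>{x \<in> ?L. proj x = \<beta>}. c \<alpha> * mon_eval (proj \<alpha>) ?q)"
      by (rule sum.image_gen[OF finL])
    also have "\<dots> = (\<Sum>\<beta>\<in>?T. S k \<beta> * mon_eval \<beta> ?q)"
    proof (rule sum.cong[OF refl])
      fix \<beta> assume "\<beta> \<in> ?T"
      have "{x \<in> ?L. proj x = \<beta>} = Fb k \<beta>" unfolding Fb_def by blast
      moreover have "(\<Sum>\<alpha>\<in>Fb k \<beta>. c \<alpha> * mon_eval (proj \<alpha>) ?q) = (\<Sum>\<alpha>\<in>Fb k \<beta>. c \<alpha> * mon_eval \<beta> ?q)"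
        by (rule sum.cong) (auto simp: Fb_def)
      ultimately show "(\<Sum>\<alpha>\<in>{x \<in> ?L. proj x = \<beta>}. c \<alpha> * mon_eval (proj \<alpha>) ?q) = S k \<beta> * mon_eval \<beta> ?q"
        unfolding S_def by (simp add: sum_distrib_right)
    qed
    finally show ?thesis .
  qed
  have finT: "finite ?T" using finL by simp
  have BT: "?B \<subseteq> ?T"
  proof
    fix \<beta> assume "\<beta> \<in> ?B"
    then obtain \<alpha> where "\<alpha> \<in> Fb k \<beta>" using Gnz_Fb by blast
    then show "\<beta> \<in> ?T" unfolding Fb_def by auto
  qed
  have d1: "P ^ k dvd ((\<Sum>\<beta>\<in>?T. S k \<beta> * mon_eval \<beta> ?q) - (\<Sum>\<beta>\<in>?T. G \<beta> * mon_eval \<beta> ?q))"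
  proof -
    have "(\<Sum>\<beta>\<in>?T. S k \<beta> * mon_eval \<beta> ?q) - (\<Sum>\<beta>\<in>?T. G \<beta> * mon_eval \<beta> ?q)
        = (\<Sum>\<beta>\<in>?T. (S k \<beta> - G \<beta>) * mon_eval \<beta> ?q)"
      by (simp add: sum_subtractf left_diff_distrib)
    also have "P ^ k dvd \<dots>" by (intro dvd_sum dvd_mult2 G_prop)
    finally show ?thesis .
  qed
  have d2: "P ^ k dvd ((\<Sum>\<beta>\<in>?T. G \<beta> * mon_eval \<beta> ?q) - (\<Sum>\<beta>\<in>?B. G \<beta> * mon_eval \<beta> ?q))"
  proof -
    have "(\<Sum>\<beta>\<in>?T. G \<beta> * mon_eval \<beta> ?q) - (\<Sum>\<beta>\<in>?B. G \<beta> * mon_eval \<beta> ?q)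
        = (\<Sum>\<beta>\<in>?T - ?B. G \<beta> * mon_eval \<beta> ?q)"
      using sum.subset_diff[OF BT finT] by (simp add: algebra_simps)
    also have "P ^ k dvd \<dots>" by (intro dvd_sum dvd_mult2) auto
    finally show ?thesis .
  qed
  have "P ^ k dvd ((w u - (\<Sum>\<alpha>\<in>A k. c \<alpha> * mon_eval \<alpha> ?pt))
     + (((\<Sum>\<beta>\<in>?T. S k \<beta> * mon_eval \<beta> ?q) - (\<Sum>\<beta>\<in>?T. G \<beta> * mon_eval \<beta> ?q))
     + ((\<Sum>\<beta>\<in>?T. G \<beta> * mon_eval \<beta> ?q) - (\<Sum>\<beta>\<in>?B. G \<beta> * mon_eval \<beta> ?q))))"
    using v0 d1 d2 by (intro dvd_add)
  then show "P ^ k dvd (w u - (\<Sum>\<beta>\<in>?B. G \<beta> * mon_eval \<beta> ?q))"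
    unfolding s1 s2 by (simp add: algebra_simps)
qed

lemma delta_map_w: "delta_map_Gm p \<phi> w"
  unfolding delta_map_Gm_def using rps_G val_G by blast

end


theorem theorem1p3:
  fixes p :: nat and \<phi> :: "'r::idom \<Rightarrow> 'r" and f :: "'r^'n^'n \<Rightarrow> 'r^'n^'n"
  assumes "delta_setting p \<phi>"
    and "delta_map_GL p \<phi> f"
    and "\<forall>g1\<in>GL_set. \<forall>g2\<in>GL_set. f (g1 ** g2) = f g1 + g1 ** f g2 ** mat_inv g1"
  shows "\<exists>(\<omega>::'r \<Rightarrow> 'r) (v::'r^'n^'n). delta_hom_Gm_Ga p \<phi> \<omega> \<and>
           (\<forall>g\<in>GL_set. f g = mat (\<omega> (det g)) + g ** v ** mat_inv g - v)"
proof -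
  have ccf: "cocyc f" using assms(3) unfolding cocyc_def Ad_def by blast
  interpret A: cocA p \<phi> f by unfold_locales (rule assms(1), rule ccf)
  define i0 :: 'n where "i0 = undefined"
  obtain V where V: "\<forall>g\<in>GL_set. f g = mat (A.om0 i0 (det g)) + g ** V ** mat_inv g - V"
    using A.main_struct by blast
  obtain m F where mF: "\<forall>i j. rps p {v. case v of None \<Rightarrow> True | Some (l, _, _) \<Rightarrow> l \<le> m} (F i j)"
    "\<forall>g\<in>GL_set. \<forall>i j. rps_val p (F i j) (GL_point p \<phi> g) (f g $ i $ j)"
    using assms(2) unfolding delta_map_GL_def by blast
  interpret D: dmap p \<phi> "F i0 i0" m i0 "A.om0 i0"
  proof unfold_locales
    show "delta_setting p \<phi>" by (rule assms(1))
    show "rps p {v. case v of None \<Rightarrow> True | Some (l, _, _) \<Rightarrow> l \<le> m} (F i0 i0)" using mF(1) by blast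
    fix u :: 'r assume u: "runit u"
    have g: "dg (\<lambda>l. if l = i0 then u else 1) \<in> GL_set" by (rule dg_GL) (simp add: u)
    show "rps_val p (F i0 i0) (GL_point p \<phi> (dg (\<lambda>l. if l = i0 then u else 1))) (A.om0 i0 u)"
      using mF(2) g unfolding A.om0_def by blast
  qed
  have "delta_hom_Gm_Ga p \<phi> (A.om0 i0)"
    unfolding delta_hom_Gm_Ga_def using A.om0_hom D.delta_map_w by blast
  then show ?thesis using V by blast
qed


end
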